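(* Let $p$ be a prime, let $M$ be an elementary abelian $p$-group (written multiplicatively), and let $1\to \mathbb{Z}/p\to \hat M\to M\to 1$ be a Frattini extension of groups with kernel of order $p$ (so $\hat M$ is a $p$-group and the kernel is central). For $m\in M$ let $\hat m$ denote a lift of $m$ to $\hat M$. Let $V^0$ be the set of nonidentity $m\in M$ whose lifts to $\hat M$ have order $p$, and $V=V^0\cup\{1\}$. Let $m_1,m_2\in M$ with $\langle m_1,m_2\rangle$ of rank $2$, and let $\langle \hat m_1,\hat m_2\rangle$ be the subgroup of $\hat M$ generated by lifts of them. (i) If $m_1,m_2\in V$: when $p=2$, $\langle\hat m_1,\hat m_2\rangle$ is either a Klein $4$-group or the dihedral group $D_4$ of order $8$; when $p\ne 2$, it is either $(\mathbb{Z}/p)^2$, or $U_p$, or it is $H_p$ and the commutator $(\hat m_1,\hat m_2)$ generates the kernel of $\langle\hat m_1,\hat m_2\rangle\to\langle m_1,m_2\rangle$. (ii) If $m_1,m_2\in M\setminus V$: when $p=2$, $\langle\hat m_1,\hat m_2\rangle$ is either $\mathbb{Z}/4\times\mathbb{Z}/2$ or the quaternion group $Q_8$; when $p\ne 2$, it is either $\mathbb{Z}/p^2\times\mathbb{Z}/p$ or $U_p$. (iii) If $m_1\in V^0$ and $m_2\in M\setminus V$, then $\langle\hat m_1,\hat m_2\rangle$ is either $\mathbb{Z}/p^2\times\mathbb{Z}/p$ or $U_p$.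
   Context: $U_p=\mathbb{Z}/p^2\rtimes\mathbb{Z}/p$, where a generator of $\mathbb{Z}/p$ acts on $\mathbb{Z}/p^2$ by sending $1$ to $1+ap$ for some $a$ prime to $p$. $H_p$ is the Heisenberg group of order $p^3$ (unipotent upper triangular $3\times3$ matrices over $\mathbb{F}_p$). Since the kernel is central, $\hat m^p$ depends only on $m$. *)

theory Defs
  imports "HOL-Algebra.Algebra"
begin

abbreviation Zmod :: "nat \<Rightarrow> int monoid" where
  "Zmod n \<equiv> integer_mod_group n"

text \<open>U_p(a) = Z/p^2 semidirect Z/p, the generator of Z/p acting by 1 maps to 1+ap.\<close>
definition U_grp :: "nat \<Rightarrow> int \<Rightarrow> (int \<times> int) monoid" where
  "U_grp p a = \<lparr>carrier = {0..<int p ^ 2} \<times> {0..<int p},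
     monoid.mult = (\<lambda>(x,i) (y,j). ((x + (1 + a * int p) ^ nat i * y) mod (int p ^ 2), (i + j) mod int p)),
     one = (0,0)\<rparr>"

text \<open>Heisenberg group H_p of unipotent upper triangular 3x3 matrices over F_p:
  the triple (a,b,c) stands for the matrix with entries a (1,2), b (2,3), c (1,3).\<close>
definition Heis_grp :: "nat \<Rightarrow> (int \<times> int \<times> int) monoid" where
  "Heis_grp p = \<lparr>carrier = {0..<int p} \<times> {0..<int p} \<times> {0..<int p},
     monoid.mult = (\<lambda>(a,b,c) (a',b',c'). ((a + a') mod int p, (b + b') mod int p, (c + c' + a * b') mod int p)),
     one = (0,0,0)\<rparr>"

text \<open>Dihedral group of order 8: r^x s^i.\<close>
definition D4_grp :: "(int \<times> int) monoid" where
  "D4_grp = \<lparr>carrier = {0..<4} \<times> {0..<2},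
     monoid.mult = (\<lambda>(x,i) (y,j). ((x + (-1) ^ nat i * y) mod 4, (i + j) mod 2)),
     one = (0,0)\<rparr>"

text \<open>Quaternion group of order 8: i^x j^b with j i = i^-1 j and j^2 = i^2.\<close>
definition Q8_grp :: "(int \<times> int) monoid" where
  "Q8_grp = \<lparr>carrier = {0..<4} \<times> {0..<2},
     monoid.mult = (\<lambda>(x,b) (y,d). ((x + (-1) ^ nat b * y + 2 * b * d) mod 4, (b + d) mod 2)),
     one = (0,0)\<rparr>"

definition frattini_ext :: "('a,'c) monoid_scheme \<Rightarrow> ('b,'d) monoid_scheme \<Rightarrow> ('a \<Rightarrow> 'b) \<Rightarrow> bool" where
  "frattini_ext Mh M phi \<longleftrightarrow>
     (\<forall>H. subgroup H Mh \<and> phi ` H = carrier M \<longrightarrow> H = carrier Mh)"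

definition V0_set :: "nat \<Rightarrow> ('a,'c) monoid_scheme \<Rightarrow> ('b,'d) monoid_scheme \<Rightarrow> ('a \<Rightarrow> 'b) \<Rightarrow> 'b set" where
  "V0_set p Mh M phi = {m \<in> carrier M. m \<noteq> \<one>\<^bsub>M\<^esub> \<and>
      (\<forall>x \<in> carrier Mh. phi x = m \<longrightarrow> group.ord Mh x = p)}"

definition V_set :: "nat \<Rightarrow> ('a,'c) monoid_scheme \<Rightarrow> ('b,'d) monoid_scheme \<Rightarrow> ('a \<Rightarrow> 'b) \<Rightarrow> 'b set" where
  "V_set p Mh M phi = V0_set p Mh M phi \<union> {\<one>\<^bsub>M\<^esub>}"

end

theory Submission
  imports Defs "HOL-Number_Theory.Number_Theory" "HOL-Algebra.Multiplicative_Group"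
begin


lemma iso_rev:
  assumes "h \<in> iso A B"
    and cl: "\<And>a b. a \<in> carrier A \<Longrightarrow> b \<in> carrier A \<Longrightarrow> a \<otimes>\<^bsub>A\<^esub> b \<in> carrier A"
  shows "B \<cong> A"
proof -
  have h: "h \<in> hom A B" "bij_betw h (carrier A) (carrier B)"
    using assms by (auto simp: iso_def)
  then have HG: "bij_betw (inv_into (carrier A) h) (carrier B) (carrier A)"
    by (simp add: bij_betw_inv_into)
  have "inv_into (carrier A) h \<in> hom B A"
    unfolding hom_def
  proof safe
    show *: "\<And>x. x \<in> carrier B \<Longrightarrow> inv_into (carrier A) h x \<in> carrier A"
      by (meson HG bij_betwE)
    fix x y assume xy: "x \<in> carrier B" "y \<in> carrier B"
    show "inv_into (carrier A) h (x \<otimes>\<^bsub>B\<^esub> y) = inv_into (carrier A) h x \<otimes>\<^bsub>A\<^esub> inv_into (carrier A) h y"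
    proof (rule inv_into_f_eq)
      show "inj_on h (carrier A)"
        using bij_betw_def h(2) by blast
      show "inv_into (carrier A) h x \<otimes>\<^bsub>A\<^esub> inv_into (carrier A) h y \<in> carrier A"
        by (simp add: * xy cl)
      show "h (inv_into (carrier A) h x \<otimes>\<^bsub>A\<^esub> inv_into (carrier A) h y) = x \<otimes>\<^bsub>B\<^esub> y"
        using h bij_betw_inv_into_right [of h] * xy unfolding hom_def by simp
    qed
  qed
  then have "inv_into (carrier A) h \<in> iso B A"
    by (simp add: Group.iso_def HG)
  then show ?thesis by (rule is_isoI)
qed

context group begin

lemma pow_mod_q:
  assumes "y \<in> carrier G" "y [^] (q::int) = \<one>"
  shows "y [^] (ww mod q) = y [^] ww"
proof -
  have "int (ord y) dvd q" using assms int_pow_eq_id by blast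
  moreover have "q dvd ww - ww mod q" by (simp add: minus_mod_eq_mult_div)
  ultimately show ?thesis using int_pow_eq[OF assms(1)] dvd_trans by metis
qed

lemma conj_int_pow:
  assumes "z \<in> carrier G" "y \<in> carrier G"
  shows "z \<otimes> y [^] (u::int) \<otimes> inv z = (z \<otimes> y \<otimes> inv z) [^] u"
proof -
  have c: "\<And>w. w \<in> carrier G \<Longrightarrow> inv z \<otimes> (z \<otimes> w) = w"
    using assms by (simp add: m_assoc[symmetric])
  have h: "(\<lambda>g. z \<otimes> g \<otimes> inv z) \<in> hom G G"
    using assms by (auto simp: hom_def m_assoc c)
  show ?thesis using hom_int_pow[OF h assms(2) is_group is_group] by simp
qed

lemma conj_iter:
  assumes z: "z \<in> carrier G" and y: "y \<in> carrier G" and c: "z \<otimes> y \<otimes> inv z = y [^] (r::int)"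
  shows "z [^] (n::nat) \<otimes> y [^] (u::int) = y [^] (r^n * u) \<otimes> z [^] n"
proof -
  have one: "z \<otimes> y [^] (w::int) = y [^] (r * w) \<otimes> z" for w
  proof -
    have "z \<otimes> y [^] w \<otimes> inv z = y [^] (r * w)"
      using conj_int_pow[OF z y, of w] c int_pow_pow[OF y] by simp
    then have "z \<otimes> y [^] w \<otimes> inv z \<otimes> z = y [^] (r * w) \<otimes> z" by simp
    then show ?thesis using z y by (simp add: m_assoc)
  qed
  show ?thesis
  proof (induction n arbitrary: u)
    case 0 then show ?case using y by simp
  next
    case (Suc n)
    have "z [^] Suc n \<otimes> y [^] u = z [^] n \<otimes> (z \<otimes> y [^] u)"
      using z y by (simp add: m_assoc)
    also have "\<dots> = z [^] n \<otimes> (y [^] (r * u) \<otimes> z)" by (simp add: one)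
    also have "\<dots> = (z [^] n \<otimes> y [^] (r * u)) \<otimes> z" using z y by (simp add: m_assoc)
    also have "\<dots> = y [^] (r ^ n * (r * u)) \<otimes> z [^] n \<otimes> z" by (simp add: Suc)
    also have "\<dots> = y [^] (r ^ Suc n * u) \<otimes> z [^] Suc n"
      using z y by (simp add: m_assoc mult.assoc mult.commute mult.left_commute)
    finally show ?case .
  qed
qed

lemma comm_pow1:
  assumes u: "u \<in> carrier G" and v: "v \<in> carrier G" and e: "e \<in> carrier G"
    and vu: "v \<otimes> u = u \<otimes> v \<otimes> e" and eu: "e \<otimes> u = u \<otimes> e" and ev: "e \<otimes> v = v \<otimes> e"
  shows "v \<otimes> u [^] (n::nat) = u [^] n \<otimes> v \<otimes> e [^] n"
proof (induction n)
  case 0 then show ?case using u v by simp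
next
  case (Suc n)
  have eun: "e [^] n \<otimes> u = u \<otimes> e [^] n" using group_commutes_pow[OF eu e u] .
  have "v \<otimes> u [^] Suc n = (v \<otimes> u [^] n) \<otimes> u" using u v by (simp add: m_assoc)
  also have "\<dots> = u [^] n \<otimes> v \<otimes> (e [^] n \<otimes> u)" using u v e by (simp add: Suc m_assoc)
  also have "\<dots> = u [^] n \<otimes> (v \<otimes> u) \<otimes> e [^] n" using u v e by (simp add: eun m_assoc)
  also have "\<dots> = u [^] n \<otimes> u \<otimes> v \<otimes> (e \<otimes> e [^] n)" using u v e by (simp add: vu m_assoc)
  also have "\<dots> = u [^] Suc n \<otimes> v \<otimes> e [^] Suc n"
    using e by (simp add: nat_pow_Suc2[symmetric] del: nat_pow_Suc)
  finally show ?case .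
qed

lemma comm_pow:
  assumes u: "u \<in> carrier G" and v: "v \<in> carrier G" and e: "e \<in> carrier G"
    and vu: "v \<otimes> u = u \<otimes> v \<otimes> e" and eu: "e \<otimes> u = u \<otimes> e" and ev: "e \<otimes> v = v \<otimes> e"
  shows "v [^] (m::nat) \<otimes> u [^] (n::nat) = u [^] n \<otimes> v [^] m \<otimes> e [^] (m * n)"
proof (induction m)
  case 0 then show ?case using u v by simp
next
  case (Suc m)
  have c1: "v \<otimes> u [^] n = u [^] n \<otimes> v \<otimes> e [^] n" by (rule comm_pow1[OF assms])
  have evn: "e [^] k \<otimes> v = v \<otimes> e [^] k" for k :: nat using group_commutes_pow[OF ev e v] .
  have "v [^] Suc m \<otimes> u [^] n = v [^] m \<otimes> (v \<otimes> u [^] n)"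
    using u v by (simp add: m_assoc nat_pow_Suc2[symmetric] del: nat_pow_Suc)
  also have "\<dots> = (v [^] m \<otimes> u [^] n) \<otimes> v \<otimes> e [^] n" using u v e by (simp add: c1 m_assoc)
  also have "\<dots> = u [^] n \<otimes> v [^] m \<otimes> (e [^] (m * n) \<otimes> v) \<otimes> e [^] n"
    using u v e by (simp add: Suc m_assoc)
  also have "\<dots> = u [^] n \<otimes> (v [^] m \<otimes> v) \<otimes> (e [^] (m * n) \<otimes> e [^] n)"
    using u v e by (simp add: evn m_assoc)
  also have "\<dots> = u [^] n \<otimes> v [^] Suc m \<otimes> e [^] (Suc m * n)"
    using u v e by (simp add: nat_pow_mult add.commute m_assoc)
  finally show ?case .
qed

lemma prod_pow:
  assumes A: "A \<in> carrier G" and B: "B \<in> carrier G" and E: "E \<in> carrier G"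
    and BA: "B \<otimes> A = A \<otimes> B \<otimes> E" and EA: "E \<otimes> A = A \<otimes> E" and EB: "E \<otimes> B = B \<otimes> E"
  shows "(A \<otimes> B) [^] (n::nat) = A [^] n \<otimes> B [^] n \<otimes> E [^] (n * (n - 1) div 2)"
proof (induction n)
  case 0 then show ?case by simp
next
  case (Suc n)
  have c: "B [^] n \<otimes> A = A \<otimes> B [^] n \<otimes> E [^] n"
    using comm_pow[OF A B E BA EA EB, of n 1] A by simp
  have eA: "E [^] k \<otimes> A = A \<otimes> E [^] k" for k :: nat using group_commutes_pow[OF EA E A] .
  have eB: "E [^] k \<otimes> B = B \<otimes> E [^] k" for k :: nat using group_commutes_pow[OF EB E B] .
  have eB2: "\<And>k y. y \<in> carrier G \<Longrightarrow> E [^] (k::nat) \<otimes> (B \<otimes> y) = B \<otimes> (E [^] k \<otimes> y)"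
    using eB B E by (metis m_assoc nat_pow_closed)
  have ar0: "n + n * (n - 1) div 2 = Suc n * (Suc n - 1) div 2"
    by (cases n) (auto simp: algebra_simps)
  have ar: "n + n * (n - Suc 0) div 2 = (n + n * n) div 2"
    using ar0 by simp
  have "(A \<otimes> B) [^] Suc n = A [^] n \<otimes> B [^] n \<otimes> E [^] (n * (n - 1) div 2) \<otimes> A \<otimes> B"
    using A B E by (simp add: Suc m_assoc)
  also have "\<dots> = A [^] n \<otimes> (B [^] n \<otimes> A) \<otimes> E [^] (n * (n - 1) div 2) \<otimes> B"
    using A B E by (simp add: eA m_assoc)
  also have "\<dots> = A [^] n \<otimes> (B [^] n \<otimes> A) \<otimes> (E [^] (n * (n - 1) div 2) \<otimes> B)"
    using A B E by (simp add: m_assoc)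
  also have "\<dots> = A [^] n \<otimes> (A \<otimes> B [^] n \<otimes> E [^] n) \<otimes> (B \<otimes> E [^] (n * (n - 1) div 2))"
    by (simp add: c eB)
  also have "\<dots> = A [^] n \<otimes> A \<otimes> B [^] n \<otimes> (E [^] n \<otimes> B) \<otimes> E [^] (n * (n - 1) div 2)"
    using A B E by (simp add: m_assoc)
  also have "\<dots> = A [^] n \<otimes> A \<otimes> B [^] n \<otimes> B \<otimes> (E [^] n \<otimes> E [^] (n * (n - 1) div 2))"
    using A B E by (simp add: eB m_assoc)
  also have "\<dots> = A [^] Suc n \<otimes> B [^] Suc n \<otimes> E [^] (Suc n * (Suc n - 1) div 2)"
    using A B E by (simp add: nat_pow_mult ar m_assoc)
  finally show ?case .
qed

lemma finite_subgroupI: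
  assumes sub: "I \<subseteq> carrier G" and fin: "finite I" and ne: "I \<noteq> {}"
    and cl: "\<And>a b. a \<in> I \<Longrightarrow> b \<in> I \<Longrightarrow> a \<otimes> b \<in> I"
  shows "subgroup I G"
proof (rule subgroupI[OF sub ne _ cl])
  fix g assume g: "g \<in> I"
  have gc: "g \<in> carrier G" using g sub by auto
  have pw: "g [^] Suc n \<in> I" for n
    by (induction n) (use g gc in \<open>auto intro: cl simp del: nat_pow_Suc simp add: nat_pow_Suc2\<close>)
  have "\<not> inj (\<lambda>n. g [^] Suc n)"
  proof
    assume "inj (\<lambda>n. g [^] Suc n)"
    then have "infinite (range (\<lambda>n. g [^] Suc n))"
      using finite_imageD infinite_UNIV_nat by blast
    moreover have "range (\<lambda>n. g [^] Suc n) \<subseteq> I" using pw by auto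
    ultimately show False using fin finite_subset by blast
  qed
  then obtain m n where mn: "m \<noteq> n" "g [^] Suc m = g [^] Suc n" unfolding inj_def by blast
  have "\<exists>k>0. g [^] (k::nat) = \<one>"
  proof (cases "m < n")
    case True
    have "g [^] Suc m \<otimes> g [^] (n - m) = g [^] Suc m \<otimes> \<one>"
    proof -
      have "g [^] Suc m \<otimes> g [^] (n - m) = g [^] (Suc m + (n - m))"
        using gc by (simp only: nat_pow_mult)
      also have "\<dots> = g [^] Suc n" using True by (simp del: nat_pow_Suc)
      also have "\<dots> = g [^] Suc m \<otimes> \<one>" using mn gc by (simp del: nat_pow_Suc)
      finally show ?thesis .
    qed
    then have "g [^] (n - m) = \<one>" using gc by (meson l_cancel nat_pow_closed one_closed)
    then show ?thesis using True by (intro exI[of _ "n - m"]) auto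
  next
    case False
    then have lt: "n < m" using mn by auto
    have "g [^] Suc n \<otimes> g [^] (m - n) = g [^] Suc n \<otimes> \<one>"
    proof -
      have "g [^] Suc n \<otimes> g [^] (m - n) = g [^] (Suc n + (m - n))"
        using gc by (simp only: nat_pow_mult)
      also have "\<dots> = g [^] Suc m" using lt by (simp del: nat_pow_Suc)
      also have "\<dots> = g [^] Suc n \<otimes> \<one>" using mn gc by (simp del: nat_pow_Suc)
      finally show ?thesis .
    qed
    then have "g [^] (m - n) = \<one>" using gc by (meson l_cancel nat_pow_closed one_closed)
    then show ?thesis using lt by (intro exI[of _ "m - n"]) auto
  qed
  then obtain k :: nat where k: "k > 0" "g [^] k = \<one>" by blast
  have "g [^] (2 * k - 1) \<otimes> g = g [^] (2 * k)"
    using k gc by (simp add: nat_pow_Suc[symmetric] del: nat_pow_Suc)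
  also have "\<dots> = \<one>" using k gc by (simp add: nat_pow_pow[symmetric] mult.commute)
  finally have "inv g = g [^] (2 * k - 1)" using gc by (simp add: inv_equality)
  moreover have "g [^] (2 * k - 1) = g [^] Suc (2 * k - 2)"
  proof -
    have "2 * k - 1 = Suc (2 * k - 2)" using k by simp
    then show ?thesis by (simp only:)
  qed
  ultimately show "inv g \<in> I" using pw by simp
qed

end


context group begin

lemma pow_commute_nat_int:
  assumes "x \<in> carrier G" "y \<in> carrier G" "x \<otimes> y = y \<otimes> x"
  shows "x [^] (n::nat) \<otimes> y [^] (m::int) = y [^] m \<otimes> x [^] n"
proof -
  have "x \<otimes> y \<otimes> inv x = y [^] (1::int)" using assms by (simp add: m_assoc)
  from conj_iter[OF assms(1,2) this, of n m] show ?thesis by simp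
qed

lemma subgroup_nat_pow_closed':
  assumes "subgroup H G" "h \<in> H" shows "h [^] (n::nat) \<in> H"
  using subgroup_int_pow_closed[OF assms, of "int n"] by (simp add: int_pow_int)

lemma nat_pow_mod_q:
  assumes "y \<in> carrier G" "y [^] (q::int) = \<one>" "0 < q"
  shows "y [^] (nat (int N mod q)) = y [^] (N::nat)"
proof -
  have "y [^] (nat (int N mod q)) = y [^] (int N mod q)"
    using assms by (simp add: int_pow_int[symmetric])
  also have "\<dots> = y [^] (int N)" by (rule pow_mod_q[OF assms(1,2)])
  finally show ?thesis by (simp add: int_pow_int)
qed

lemma gen_iso:
  fixes H :: "(int \<times> int) monoid" and q pp r t :: int
  assumes y: "y \<in> carrier G" and z: "z \<in> carrier G" and q: "1 < q" and pp: "1 < pp"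
    and yq: "y [^] q = \<one>" and zp: "z [^] pp = y [^] t" and cj: "z \<otimes> y \<otimes> inv z = y [^] r"
    and cH: "carrier H = {0..<q} \<times> {0..<pp}"
    and mH: "\<And>x i u j. x \<in> {0..<q} \<Longrightarrow> i \<in> {0..<pp} \<Longrightarrow> u \<in> {0..<q} \<Longrightarrow> j \<in> {0..<pp} \<Longrightarrow>
        (x,i) \<otimes>\<^bsub>H\<^esub> (u,j) = ((x + r ^ nat i * u + t * ((i + j) div pp)) mod q, (i + j) mod pp)"
    and inj: "inj_on (\<lambda>(x,i). y [^] x \<otimes> z [^] i) ({0..<q} \<times> {0..<pp})"
  shows "G\<lparr>carrier := generate G {y,z}\<rparr> \<cong> H"
proof -
  define f where "f = (\<lambda>(x::int,i::int). y [^] x \<otimes> z [^] i)"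
  define S where "S = generate G {y,z}"
  have yzS: "y \<in> S" "z \<in> S" by (auto simp: S_def intro: generate.incl)
  have subS: "subgroup S G" unfolding S_def by (rule generate_is_subgroup) (use y z in auto)
  have fS: "f a \<in> S" for a
    using subS yzS by (cases a) (auto simp: f_def intro!: subgroup.m_closed subgroup_int_pow_closed)
  have fc: "f a \<in> carrier G" for a using fS subS subgroup.subset by blast
  have key: "f (x,i) \<otimes> f (u,j) = f ((x + r ^ nat i * u + t * ((i + j) div pp)) mod q, (i + j) mod pp)"
    if "i \<ge> 0" "j \<ge> 0" for x i u j
  proof -
    have zi: "z [^] i = z [^] (nat i)" using that by (metis int_nat_eq int_pow_int)
    have "f (x,i) \<otimes> f (u,j) = y [^] x \<otimes> (z [^] nat i \<otimes> y [^] u) \<otimes> z [^] j"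
      using y z by (simp add: f_def zi m_assoc)
    also have "\<dots> = y [^] x \<otimes> (y [^] (r ^ nat i * u) \<otimes> z [^] nat i) \<otimes> z [^] j"
      by (simp add: conj_iter[OF z y cj])
    also have "\<dots> = y [^] x \<otimes> y [^] (r ^ nat i * u) \<otimes> (z [^] i \<otimes> z [^] j)"
      using y z by (simp add: m_assoc zi)
    also have zz: "z [^] i \<otimes> z [^] j = (z [^] pp) [^] ((i + j) div pp) \<otimes> z [^] ((i + j) mod pp)"
    proof -
      have "z [^] i \<otimes> z [^] j = z [^] (i + j)" using z by (simp add: int_pow_mult)
      also have "z [^] (i + j) = z [^] (pp * ((i + j) div pp) + (i + j) mod pp)" by simp
      also have "\<dots> = z [^] (pp * ((i + j) div pp)) \<otimes> z [^] ((i + j) mod pp)" using z by (rule int_pow_mult)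
      also have "z [^] (pp * ((i + j) div pp)) = (z [^] pp) [^] ((i + j) div pp)" using z by (simp add: int_pow_pow)
      finally show ?thesis .
    qed
    also have "\<dots> = y [^] (t * ((i + j) div pp)) \<otimes> z [^] ((i + j) mod pp)"
      using y by (simp add: zp int_pow_pow)
    also have "y [^] x \<otimes> y [^] (r ^ nat i * u) \<otimes> (y [^] (t * ((i + j) div pp)) \<otimes> z [^] ((i + j) mod pp))
       = y [^] (x + r ^ nat i * u + t * ((i + j) div pp)) \<otimes> z [^] ((i + j) mod pp)"
      using y z by (simp add: int_pow_mult m_assoc)
    also have "\<dots> = f ((x + r ^ nat i * u + t * ((i + j) div pp)) mod q, (i + j) mod pp)"
      by (simp add: f_def pow_mod_q[OF y yq])
    finally show ?thesis .
  qed
  have clH: "a \<otimes>\<^bsub>H\<^esub> b \<in> carrier H" if "a \<in> carrier H" "b \<in> carrier H" for a b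
    using that q pp by (auto simp: cH mH)
  have fmult: "f (a \<otimes>\<^bsub>H\<^esub> b) = f a \<otimes> f b" if "a \<in> carrier H" "b \<in> carrier H" for a b
    using that by (auto simp: cH mH key)
  define I where "I = f ` carrier H"
  have subI: "subgroup I G"
  proof (rule finite_subgroupI)
    show "I \<subseteq> carrier G" using fc by (auto simp: I_def)
    show "finite I" by (simp add: I_def cH)
    show "I \<noteq> {}" using q pp by (auto simp: I_def cH)
    fix a b assume "a \<in> I" "b \<in> I"
    then obtain a' b' where "a' \<in> carrier H" "b' \<in> carrier H" "a = f a'" "b = f b'"
      by (auto simp: I_def)
    then show "a \<otimes> b \<in> I" unfolding I_def using fmult clH by (metis image_eqI)
  qed
  have "y = f (1, 0)" using y by (simp add: f_def)
  then have yI: "y \<in> I" using q pp by (auto simp: I_def cH)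
  have "z = f (0, 1)" using z by (simp add: f_def)
  then have zI: "z \<in> I" using q pp by (auto simp: I_def cH)
  have SI: "S \<subseteq> I" unfolding S_def
    by (rule generate_subgroup_incl) (use yI zI subI in auto)
  have IS: "I \<subseteq> S" using fS by (auto simp: I_def)
  have "f \<in> iso H (G\<lparr>carrier := S\<rparr>)"
  proof (rule isoI)
    show "f \<in> hom H (G\<lparr>carrier := S\<rparr>)"
      unfolding hom_def using fS fmult by auto
    show "bij_betw f (carrier H) (carrier (G\<lparr>carrier := S\<rparr>))"
      unfolding bij_betw_def using inj SI IS by (auto simp: cH I_def f_def)
  qed
  then show ?thesis unfolding S_def using iso_rev clH by blast
qed

lemma heis_iso:
  fixes H :: "(int \<times> int \<times> int) monoid" and pp :: int
  assumes u: "u \<in> carrier G" and v: "v \<in> carrier G" and e: "e \<in> carrier G" and pp: "1 < pp"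
    and up: "u [^] pp = \<one>" and vp: "v [^] pp = \<one>" and ep: "e [^] pp = \<one>"
    and vu: "v \<otimes> u = u \<otimes> v \<otimes> e" and eu: "e \<otimes> u = u \<otimes> e" and ev: "e \<otimes> v = v \<otimes> e"
    and eS: "e \<in> generate G {u,v}"
    and cH: "carrier H = {0..<pp} \<times> {0..<pp} \<times> {0..<pp}"
    and mH: "\<And>a b c a' b' c'. a \<in> {0..<pp} \<Longrightarrow> b \<in> {0..<pp} \<Longrightarrow> c \<in> {0..<pp} \<Longrightarrow>
        a' \<in> {0..<pp} \<Longrightarrow> b' \<in> {0..<pp} \<Longrightarrow> c' \<in> {0..<pp} \<Longrightarrow>
        (a,b,c) \<otimes>\<^bsub>H\<^esub> (a',b',c') = ((a + a') mod pp, (b + b') mod pp, (c + c' + a * b') mod pp)"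
    and inj: "inj_on (\<lambda>(a,b,c). u [^] nat b \<otimes> v [^] nat a \<otimes> e [^] nat c) ({0..<pp} \<times> {0..<pp} \<times> {0..<pp})"
  shows "G\<lparr>carrier := generate G {u,v}\<rparr> \<cong> H"
proof -
  define f where "f = (\<lambda>(a::int,b::int,c::int). u [^] nat b \<otimes> v [^] nat a \<otimes> e [^] nat c)"
  define S where "S = generate G {u,v}"
  have uvS: "u \<in> S" "v \<in> S" "e \<in> S" using eS by (auto simp: S_def intro: generate.incl)
  have subS: "subgroup S G" unfolding S_def by (rule generate_is_subgroup) (use u v in auto)
  have fS: "f a \<in> S" for a
    using subS uvS by (cases a) (auto simp: f_def intro!: subgroup.m_closed subgroup_nat_pow_closed')
  have fc: "f a \<in> carrier G" for a using fS subS subgroup.subset by blast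
  have eun: "e [^] (k::nat) \<otimes> u [^] (m::nat) = u [^] m \<otimes> e [^] k" for k m
    using pow_commute_nat_int[OF e u eu, of k "int m"] by (simp add: int_pow_int)
  have evn: "e [^] (k::nat) \<otimes> v [^] (m::nat) = v [^] m \<otimes> e [^] k" for k m
    using pow_commute_nat_int[OF e v ev, of k "int m"] by (simp add: int_pow_int)
  have cvu: "v [^] (m::nat) \<otimes> u [^] (n::nat) = u [^] n \<otimes> v [^] m \<otimes> e [^] (m * n)" for m n
    by (rule comm_pow[OF u v e vu eu ev])
  have keyN: "u [^] B \<otimes> v [^] A \<otimes> e [^] C \<otimes> (u [^] B' \<otimes> v [^] A' \<otimes> e [^] C')
     = u [^] (B + B') \<otimes> v [^] (A + A') \<otimes> e [^] (C + C' + A * B')" for A B C A' B' C' :: nat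
  proof -
    have "u [^] B \<otimes> v [^] A \<otimes> e [^] C \<otimes> (u [^] B' \<otimes> v [^] A' \<otimes> e [^] C')
        = u [^] B \<otimes> v [^] A \<otimes> (e [^] C \<otimes> u [^] B') \<otimes> v [^] A' \<otimes> e [^] C'"
      using u v e by (simp add: m_assoc)
    also have "\<dots> = u [^] B \<otimes> (v [^] A \<otimes> u [^] B') \<otimes> (e [^] C \<otimes> v [^] A') \<otimes> e [^] C'"
      using u v e by (simp add: eun m_assoc)
    also have "\<dots> = u [^] B \<otimes> (u [^] B' \<otimes> v [^] A \<otimes> e [^] (A * B')) \<otimes> (v [^] A' \<otimes> e [^] C) \<otimes> e [^] C'"
      using u v e by (simp add: cvu evn)
    also have "\<dots> = u [^] B \<otimes> u [^] B' \<otimes> v [^] A \<otimes> (e [^] (A * B') \<otimes> v [^] A') \<otimes> e [^] C \<otimes> e [^] C'"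
      using u v e by (simp add: m_assoc)
    also have "\<dots> = u [^] B \<otimes> u [^] B' \<otimes> (v [^] A \<otimes> v [^] A') \<otimes> (e [^] (A * B') \<otimes> e [^] C \<otimes> e [^] C')"
      using u v e by (simp add: evn m_assoc)
    also have "\<dots> = u [^] (B + B') \<otimes> v [^] (A + A') \<otimes> e [^] (C + C' + A * B')"
      using u v e by (simp add: nat_pow_mult m_assoc add_ac)
    finally show ?thesis .
  qed
  have p0: "0 < pp" using pp by simp
  have key: "f (a,b,c) \<otimes> f (a',b',c') = f ((a + a') mod pp, (b + b') mod pp, (c + c' + a * b') mod pp)"
    if "a \<ge> 0" "b \<ge> 0" "c \<ge> 0" "a' \<ge> 0" "b' \<ge> 0" "c' \<ge> 0" for a b c a' b' c'
  proof -
    have "f (a,b,c) \<otimes> f (a',b',c') = u [^] (nat b + nat b') \<otimes> v [^] (nat a + nat a') \<otimes> e [^] (nat c + nat c' + nat a * nat b')"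
      by (simp add: f_def keyN)
    also have "\<dots> = u [^] nat (int (nat b + nat b') mod pp) \<otimes> v [^] nat (int (nat a + nat a') mod pp)
        \<otimes> e [^] nat (int (nat c + nat c' + nat a * nat b') mod pp)"
      using pp by (simp only: nat_pow_mod_q[OF u up p0] nat_pow_mod_q[OF v vp p0] nat_pow_mod_q[OF e ep p0])
    also have "\<dots> = f ((a + a') mod pp, (b + b') mod pp, (c + c' + a * b') mod pp)"
    proof -
      have eqs: "int (nat b + nat b') = b + b'" "int (nat a + nat a') = a + a'"
        "int (nat c + nat c' + nat a * nat b') = c + c' + a * b'"
        using that by (auto simp: of_nat_mult)
      show ?thesis by (simp only: eqs f_def prod.case)
    qed
    finally show ?thesis .
  qed
  have clH: "a \<otimes>\<^bsub>H\<^esub> b \<in> carrier H" if "a \<in> carrier H" "b \<in> carrier H" for a b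
    using that pp by (auto simp: cH mH)
  have fmult: "f (a \<otimes>\<^bsub>H\<^esub> b) = f a \<otimes> f b" if "a \<in> carrier H" "b \<in> carrier H" for a b
    using that by (auto simp: cH mH key)
  define I where "I = f ` carrier H"
  have subI: "subgroup I G"
  proof (rule finite_subgroupI)
    show "I \<subseteq> carrier G" using fc by (auto simp: I_def)
    show "finite I" by (simp add: I_def cH)
    show "I \<noteq> {}" using pp by (auto simp: I_def cH)
    fix a b assume "a \<in> I" "b \<in> I"
    then obtain a' b' where "a' \<in> carrier H" "b' \<in> carrier H" "a = f a'" "b = f b'"
      by (auto simp: I_def)
    then show "a \<otimes> b \<in> I" unfolding I_def using fmult clH by (metis image_eqI)
  qed
  have "u = f (0, 1, 0)" using u by (simp add: f_def)
  then have uI: "u \<in> I" using pp by (auto simp: I_def cH)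
  have "v = f (1, 0, 0)" using v by (simp add: f_def)
  then have vI: "v \<in> I" using pp by (auto simp: I_def cH)
  have SI: "S \<subseteq> I" unfolding S_def
    by (rule generate_subgroup_incl) (use uI vI subI in auto)
  have IS: "I \<subseteq> S" using fS by (auto simp: I_def)
  have "f \<in> iso H (G\<lparr>carrier := S\<rparr>)"
  proof (rule isoI)
    show "f \<in> hom H (G\<lparr>carrier := S\<rparr>)"
      unfolding hom_def using fS fmult by auto
    show "bij_betw f (carrier H) (carrier (G\<lparr>carrier := S\<rparr>))"
      unfolding bij_betw_def using inj SI IS by (auto simp: cH I_def f_def)
  qed
  then show ?thesis unfolding S_def using iso_rev clH by blast
qed

end


lemma fermat_int:
  assumes p: "Factorial_Ring.prime (p::nat)"
  shows "[(s::int) ^ p = s] (mod int p)"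
proof -
  define a where "a = nat (s mod int p)"
  have p0: "0 < p" using p prime_gt_0_nat by blast
  have as: "[int a = s] (mod int p)" using p0 by (simp add: a_def cong_def)
  show ?thesis
  proof (cases "p dvd a")
    case True
    then have "int p dvd int a" by simp
    then have "int p dvd s" using as by (metis cong_dvd_iff)
    then have "int p dvd s ^ p" using p0 dvd_power[of p s] dvd_trans by blast
    then show ?thesis using \<open>int p dvd s\<close> by (simp add: cong_def)
  next
    case False
    have "[a ^ (p - 1) = 1] (mod p)" by (rule fermat_theorem[OF p False])
    then have "[a ^ (p - 1) * a = 1 * a] (mod p)" by (rule cong_scalar_right)
    moreover have "a ^ (p - 1) * a = a ^ p" using p0 by (metis Suc_diff_1 power_Suc2)
    ultimately have "[a ^ p = a] (mod p)" by simp
    then have "[int a ^ p = int a] (mod int p)" using cong_int_iff by force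
    moreover have "[s ^ p = int a ^ p] (mod int p)" by (rule cong_pow[OF cong_sym[OF as]])
    ultimately show ?thesis using as by (metis cong_trans)
  qed
qed

lemma fermat_int2:
  assumes p: "Factorial_Ring.prime (p::nat)"
  shows "[(s::int) ^ (p * p) = s] (mod int p)"
proof -
  have "[(s ^ p) ^ p = s ^ p] (mod int p)" by (rule fermat_int[OF p])
  then have "[s ^ (p * p) = s ^ p] (mod int p)" by (simp add: power_mult)
  then show ?thesis using fermat_int[OF p] cong_trans by blast
qed


locale L = G: group G + M: comm_group M for G (structure) and M (structure) +
  fixes phi and p :: nat and x1 x2
  assumes hom: "phi \<in> hom G M"
    and pr: "Factorial_Ring.prime p" and Mp: "\<forall>m\<in>carrier M. m [^]\<^bsub>M\<^esub> p = \<one>\<^bsub>M\<^esub>"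
    and kcard: "card (kernel G M phi) = p"
    and x1: "x1 \<in> carrier G" and x2: "x2 \<in> carrier G"
    and gc: "card (generate M {phi x1, phi x2}) = p ^ 2"
begin

abbreviation "K \<equiv> kernel G M phi"

lemma p1: "1 < p" using pr prime_gt_1_nat by blast
lemma p0: "0 < p" using p1 by simp

lemma gh: "group_hom G M phi"
  by (simp add: group_hom_def group_hom_axioms_def hom G.is_group M.is_group)

lemma phi_c: "g \<in> carrier G \<Longrightarrow> phi g \<in> carrier M"
  using hom by (auto simp: hom_def)

lemma phi_mult: "g \<in> carrier G \<Longrightarrow> h \<in> carrier G \<Longrightarrow> phi (g \<otimes> h) = phi g \<otimes>\<^bsub>M\<^esub> phi h"
  using hom by (auto simp: hom_def)

lemma phi_inv: "g \<in> carrier G \<Longrightarrow> phi (inv g) = inv\<^bsub>M\<^esub> phi g"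
  using group_hom.hom_inv[OF gh] by blast

lemma phi_ipow: "g \<in> carrier G \<Longrightarrow> phi (g [^] (n::int)) = phi g [^]\<^bsub>M\<^esub> n"
  using group_hom.hom_int_pow[OF gh] by blast

lemma phi_npow: "g \<in> carrier G \<Longrightarrow> phi (g [^] (n::nat)) = phi g [^]\<^bsub>M\<^esub> n"
  using group_hom.hom_nat_pow[OF gh] by blast

lemma subK: "subgroup K G" using group_hom.subgroup_kernel[OF gh] .

lemma Kc: "k \<in> K \<Longrightarrow> k \<in> carrier G" by (simp add: kernel_def)

lemma finK: "finite K" using kcard p0 card_ge_0_finite by force

lemma oneK: "\<one> \<in> K" using subK subgroup.one_closed by blast

lemma K_gen:
  assumes k: "k \<in> K" "k \<noteq> \<one>"
  shows "generate G {k} = K" "G.ord k = p"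
proof -
  have kc: "k \<in> carrier G" using k Kc by blast
  have sub: "generate G {k} \<subseteq> K"
    by (rule G.generate_subgroup_incl) (use k subK in auto)
  have sg: "subgroup (generate G {k}) (G\<lparr>carrier := K\<rparr>)"
    by (rule G.subgroup_incl[OF G.generate_is_subgroup subK sub]) (use kc in auto)
  have grp: "group (G\<lparr>carrier := K\<rparr>)" using G.subgroup_imp_group[OF subK] .
  have "card (rcosets\<^bsub>G\<lparr>carrier := K\<rparr>\<^esub> (generate G {k})) * card (generate G {k}) = order (G\<lparr>carrier := K\<rparr>)"
    using group.lagrange[OF grp sg] .
  moreover have "order (G\<lparr>carrier := K\<rparr>) = p" by (simp add: order_def kcard)
  ultimately have "card (rcosets\<^bsub>G\<lparr>carrier := K\<rparr>\<^esub> (generate G {k})) * card (generate G {k}) = p" by simp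
  then have dv: "card (generate G {k}) dvd p" by (metis dvd_triv_right)
  have "{\<one>, k} \<subseteq> generate G {k}" using generate.one generate.incl[of k "{k}" G] by auto
  then have "card {\<one>, k} \<le> card (generate G {k})"
    using finK sub by (meson card_mono finite_subset)
  then have "2 \<le> card (generate G {k})" using k by simp
  moreover have "card (generate G {k}) = 1 \<or> card (generate G {k}) = p"
    using dv pr by (simp add: prime_nat_iff)
  ultimately have cp: "card (generate G {k}) = p" by auto
  show "generate G {k} = K" using card_subset_eq[OF finK sub] cp kcard by simp
  show "G.ord k = p" using G.generate_pow_card[OF kc] cp by simp
qed

lemma K_powp: assumes k: "k \<in> K" shows "k [^] p = \<one>"
proof (cases "k = \<one>")
  case True then show ?thesis by simp
next
  case False then show ?thesis using K_gen(2)[OF k False] G.pow_ord_eq_1[OF Kc[OF k]] by simp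
qed

lemma K_ipowp: "k \<in> K \<Longrightarrow> k [^] (int p) = \<one>"
  using K_powp by (simp add: int_pow_int)

lemma K_ord_dvd:
  assumes "k \<in> K" "k \<noteq> \<one>" shows "k [^] (d::int) = \<one> \<longleftrightarrow> int p dvd d"
  using G.int_pow_eq_id[OF Kc[OF assms(1)], of d] K_gen(2)[OF assms] by simp

lemma K_elem:
  assumes "k \<in> K" "k \<noteq> \<one>" "k' \<in> K" shows "\<exists>w::int. k' = k [^] w"
  using K_gen(1)[OF assms(1,2)] G.generate_pow[OF Kc[OF assms(1)]] assms(3) by auto

lemma K_in: "g \<in> carrier G \<Longrightarrow> phi g = \<one>\<^bsub>M\<^esub> \<Longrightarrow> g \<in> K"
  by (simp add: kernel_def)

lemma K_powin: assumes g: "g \<in> carrier G" shows "g [^] p \<in> K"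
proof (rule K_in)
  show "g [^] p \<in> carrier G" using g by simp
  show "phi (g [^] p) = \<one>\<^bsub>M\<^esub>" using phi_npow[OF g] Mp phi_c[OF g] by simp
qed

lemma K_conj: assumes g: "g \<in> carrier G" and k: "k \<in> K" shows "g \<otimes> k \<otimes> inv g \<in> K"
proof (rule K_in)
  have kc: "k \<in> carrier G" using Kc k by blast
  have pk: "phi k = \<one>\<^bsub>M\<^esub>" using k by (simp add: kernel_def)
  show "g \<otimes> k \<otimes> inv g \<in> carrier G" using g kc by simp
  show "phi (g \<otimes> k \<otimes> inv g) = \<one>\<^bsub>M\<^esub>"
    using g kc by (simp add: phi_mult phi_inv phi_c pk)
qed

lemma central:
  assumes k: "k \<in> K" and g: "g \<in> carrier G" and gp: "g [^] (p * p) = \<one>"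
  shows "k \<otimes> g = g \<otimes> k"
proof (cases "k = \<one>")
  case True then show ?thesis using g by simp
next
  case False
  have kc: "k \<in> carrier G" using k Kc by blast
  obtain s :: int where s: "g \<otimes> k \<otimes> inv g = k [^] s" using K_elem[OF k False K_conj[OF g k]] by blast
  have "g [^] (p * p) \<otimes> k [^] (1::int) = k [^] (s ^ (p * p) * 1) \<otimes> g [^] (p * p)"
    by (rule G.conj_iter[OF g kc s])
  then have "k [^] (1::int) = k [^] (s ^ (p * p))" using gp kc by simp
  then have "int p dvd s ^ (p * p) - 1" using G.int_pow_eq[OF kc, of 1 "s ^ (p * p)"] K_gen(2)[OF k False] by simp
  moreover have "int p dvd s ^ (p * p) - s" using fermat_int2[OF pr, of s]
    by (simp add: cong_iff_dvd_diff)
  ultimately have "int p dvd (s ^ (p * p) - 1) - (s ^ (p * p) - s)" by (rule dvd_diff)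
  moreover have "(s ^ (p * p) - 1) - (s ^ (p * p) - s) = s - 1" by simp
  ultimately have "int p dvd s - 1" by simp
  then have "k [^] (1::int) = k [^] s" using G.int_pow_eq[OF kc, of 1 s] K_gen(2)[OF k False] by simp
  then have "g \<otimes> k \<otimes> inv g = k" using s kc by simp
  then show ?thesis using G.inv_solve_right[of k "g \<otimes> k" g] g kc by auto
qed

lemma x_pp: assumes g: "g \<in> carrier G" shows "g [^] (p * p) = \<one>"
proof -
  have "(g [^] p) [^] p = g [^] (p * p)" using G.nat_pow_pow[OF g] by simp
  then show ?thesis using K_powp[OF K_powin[OF g]] by simp
qed

lemma central1: "k \<in> K \<Longrightarrow> k \<otimes> x1 = x1 \<otimes> k" using central x1 x_pp by blast
lemma central2: "k \<in> K \<Longrightarrow> k \<otimes> x2 = x2 \<otimes> k" using central x2 x_pp by blast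

end


context L begin

abbreviation "m1 \<equiv> phi x1"
abbreviation "m2 \<equiv> phi x2"

definition indep where
  "indep u v \<longleftrightarrow> (\<forall>x i::int. u [^]\<^bsub>M\<^esub> x \<otimes>\<^bsub>M\<^esub> v [^]\<^bsub>M\<^esub> i = \<one>\<^bsub>M\<^esub> \<longrightarrow> int p dvd x \<and> int p dvd i)"

lemma m1c: "m1 \<in> carrier M" using phi_c x1 by blast
lemma m2c: "m2 \<in> carrier M" using phi_c x2 by blast

lemma M_pow_mod:
  assumes m: "m \<in> carrier M" shows "m [^]\<^bsub>M\<^esub> (n::nat) = m [^]\<^bsub>M\<^esub> (n mod p)"
proof -
  have "m [^]\<^bsub>M\<^esub> n = m [^]\<^bsub>M\<^esub> (p * (n div p) + n mod p)" by simp
  also have "\<dots> = (m [^]\<^bsub>M\<^esub> p) [^]\<^bsub>M\<^esub> (n div p) \<otimes>\<^bsub>M\<^esub> m [^]\<^bsub>M\<^esub> (n mod p)"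
  proof -
    have "m [^]\<^bsub>M\<^esub> (p * (n div p) + n mod p) = m [^]\<^bsub>M\<^esub> (p * (n div p)) \<otimes>\<^bsub>M\<^esub> m [^]\<^bsub>M\<^esub> (n mod p)"
      using M.nat_pow_mult[OF m, of "p * (n div p)" "n mod p"] by simp
    moreover have "m [^]\<^bsub>M\<^esub> (p * (n div p)) = (m [^]\<^bsub>M\<^esub> p) [^]\<^bsub>M\<^esub> (n div p)"
      using M.nat_pow_pow[OF m] by simp
    ultimately show ?thesis by simp
  qed
  also have "\<dots> = m [^]\<^bsub>M\<^esub> (n mod p)" using Mp m by simp
  finally show ?thesis .
qed

lemma M_ipow_mod:
  assumes m: "m \<in> carrier M" shows "m [^]\<^bsub>M\<^esub> (x::int) = m [^]\<^bsub>M\<^esub> (nat (x mod int p))"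
proof -
  have "m [^]\<^bsub>M\<^esub> (int p) = \<one>\<^bsub>M\<^esub>" using Mp m by (simp add: int_pow_int)
  then have "m [^]\<^bsub>M\<^esub> (x mod int p) = m [^]\<^bsub>M\<^esub> x" by (rule M.pow_mod_q[OF m])
  moreover have "m [^]\<^bsub>M\<^esub> (x mod int p) = m [^]\<^bsub>M\<^esub> (nat (x mod int p))"
  proof -
    have e: "int (nat (x mod int p)) = x mod int p" using p0 by simp
    show ?thesis using int_pow_int[of M m "nat (x mod int p)"] by (simp only: e)
  qed
  ultimately show ?thesis by simp
qed

lemma indep12: "indep m1 m2"
proof -
  define F where "F = (\<lambda>(i::nat,j::nat). m1 [^]\<^bsub>M\<^esub> i \<otimes>\<^bsub>M\<^esub> m2 [^]\<^bsub>M\<^esub> j)"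
  define T where "T = F ` ({..<p} \<times> {..<p})"
  have Fc: "F a \<in> carrier M" for a using m1c m2c by (cases a) (simp add: F_def)
  have Fm: "F (i,j) \<otimes>\<^bsub>M\<^esub> F (i',j') = F ((i + i') mod p, (j + j') mod p)" for i j i' j'
  proof -
    have "F (i,j) \<otimes>\<^bsub>M\<^esub> F (i',j') = (m1 [^]\<^bsub>M\<^esub> i \<otimes>\<^bsub>M\<^esub> m1 [^]\<^bsub>M\<^esub> i') \<otimes>\<^bsub>M\<^esub> (m2 [^]\<^bsub>M\<^esub> j \<otimes>\<^bsub>M\<^esub> m2 [^]\<^bsub>M\<^esub> j')"
      using m1c m2c by (simp add: F_def M.m_ac)
    also have "\<dots> = m1 [^]\<^bsub>M\<^esub> (i + i') \<otimes>\<^bsub>M\<^esub> m2 [^]\<^bsub>M\<^esub> (j + j')"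
      using m1c m2c by (simp add: M.nat_pow_mult)
    also have "\<dots> = F ((i + i') mod p, (j + j') mod p)"
      using M_pow_mod[OF m1c, of "i + i'"] M_pow_mod[OF m2c, of "j + j'"] by (simp add: F_def)
    finally show ?thesis .
  qed
  have subT: "subgroup T M"
  proof (rule M.finite_subgroupI)
    show "T \<subseteq> carrier M" using Fc by (auto simp: T_def)
    show "finite T" by (simp add: T_def)
    show "T \<noteq> {}" using p0 by (auto simp: T_def)
    fix a b assume "a \<in> T" "b \<in> T"
    then obtain i j i' j' where "a = F (i,j)" "b = F (i',j')" by (auto simp: T_def)
    then show "a \<otimes>\<^bsub>M\<^esub> b \<in> T" using Fm p0 by (auto simp: T_def)
  qed
  have "m1 = F (1, 0)" using m1c by (simp add: F_def)
  then have m1T: "m1 \<in> T" using p1 by (auto simp: T_def)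
  have "m2 = F (0, 1)" using m2c by (simp add: F_def)
  then have m2T: "m2 \<in> T" using p1 by (auto simp: T_def)
  have gT: "generate M {m1, m2} \<subseteq> T"
    by (rule M.generate_subgroup_incl) (use m1T m2T subT in auto)
  have "p ^ 2 \<le> card T" using card_mono[OF _ gT] gc by (simp add: T_def)
  moreover have "card T \<le> p * p" unfolding T_def
    using card_image_le[of "{..<p} \<times> {..<p}" F] by simp
  ultimately have "card T = card ({..<p} \<times> {..<p})" by (simp add: power2_eq_square)
  then have inj: "inj_on F ({..<p} \<times> {..<p})" unfolding T_def
    by (rule eq_card_imp_inj_on[rotated]) simp
  show ?thesis unfolding indep_def
  proof (intro allI impI)
    fix x i :: int
    assume h: "m1 [^]\<^bsub>M\<^esub> x \<otimes>\<^bsub>M\<^esub> m2 [^]\<^bsub>M\<^esub> i = \<one>\<^bsub>M\<^esub>"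
    have "F (nat (x mod int p), nat (i mod int p)) = F (0, 0)"
      using h M_ipow_mod[OF m1c, of x] M_ipow_mod[OF m2c, of i] by (simp add: F_def)
    moreover have "(nat (x mod int p), nat (i mod int p)) \<in> {..<p} \<times> {..<p}"
      using p0 by (simp add: nat_less_iff)
    moreover have "(0, 0) \<in> {..<p} \<times> {..<p}" using p0 by simp
    ultimately have "(nat (x mod int p), nat (i mod int p)) = (0, 0)"
      using inj_onD[OF inj] by blast
    then have z: "nat (x mod int p) = 0" "nat (i mod int p) = 0" by auto
    have "0 \<le> x mod int p" "0 \<le> i mod int p" using p0 by auto
    then have "x mod int p = 0" "i mod int p = 0" using z by auto
    then show "int p dvd x \<and> int p dvd i" by (simp add: dvd_eq_mod_eq_0)
  qed
qed

end


context group begin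
lemma lcanc1: "a \<in> carrier G \<Longrightarrow> w \<in> carrier G \<Longrightarrow> inv a \<otimes> (a \<otimes> w) = w"
  by (simp add: m_assoc[symmetric])
lemma lcanc2: "a \<in> carrier G \<Longrightarrow> w \<in> carrier G \<Longrightarrow> a \<otimes> (inv a \<otimes> w) = w"
  by (simp add: m_assoc[symmetric])
end

context L begin

lemma dvd_range_eq:
  fixes x x' q :: int
  assumes "x \<in> {0..<q}" "x' \<in> {0..<q}" "q dvd x - x'"
  shows "x = x'"
proof -
  have "x mod q = x' mod q" using assms(3) by (simp add: mod_eq_dvd_iff)
  then show ?thesis using assms(1,2) by simp
qed

lemma indep_swap:
  assumes u: "u \<in> carrier M" and v: "v \<in> carrier M" and ind: "indep u v" shows "indep v u"
  unfolding indep_def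
proof (intro allI impI)
  fix x i :: int assume "v [^]\<^bsub>M\<^esub> x \<otimes>\<^bsub>M\<^esub> u [^]\<^bsub>M\<^esub> i = \<one>\<^bsub>M\<^esub>"
  then have "u [^]\<^bsub>M\<^esub> i \<otimes>\<^bsub>M\<^esub> v [^]\<^bsub>M\<^esub> x = \<one>\<^bsub>M\<^esub>" using u v by (simp add: M.m_comm)
  then show "int p dvd x \<and> int p dvd i" using ind unfolding indep_def by blast
qed

lemma indep21: "indep m2 m1" using indep_swap[OF m1c m2c indep12] .

lemma indep_D4: "indep (m1 \<otimes>\<^bsub>M\<^esub> m2) m1"
  unfolding indep_def
proof (intro allI impI)
  fix x i :: int assume h: "(m1 \<otimes>\<^bsub>M\<^esub> m2) [^]\<^bsub>M\<^esub> x \<otimes>\<^bsub>M\<^esub> m1 [^]\<^bsub>M\<^esub> i = \<one>\<^bsub>M\<^esub>"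
  have "(m1 \<otimes>\<^bsub>M\<^esub> m2) [^]\<^bsub>M\<^esub> x \<otimes>\<^bsub>M\<^esub> m1 [^]\<^bsub>M\<^esub> i
      = (m1 [^]\<^bsub>M\<^esub> x \<otimes>\<^bsub>M\<^esub> m1 [^]\<^bsub>M\<^esub> i) \<otimes>\<^bsub>M\<^esub> m2 [^]\<^bsub>M\<^esub> x"
    using m1c m2c by (simp add: M.int_pow_distrib M.m_ac)
  also have "\<dots> = m1 [^]\<^bsub>M\<^esub> (x + i) \<otimes>\<^bsub>M\<^esub> m2 [^]\<^bsub>M\<^esub> x"
    using m1c by (simp add: M.int_pow_mult)
  finally have "m1 [^]\<^bsub>M\<^esub> (x + i) \<otimes>\<^bsub>M\<^esub> m2 [^]\<^bsub>M\<^esub> x = \<one>\<^bsub>M\<^esub>" using h by simp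
  then have "int p dvd x + i" "int p dvd x" using indep12 unfolding indep_def by blast+
  then show "int p dvd x \<and> int p dvd i" by (metis add_diff_cancel_left' dvd_diff)
qed

lemma indep_z: "indep m1 (m2 \<otimes>\<^bsub>M\<^esub> m1 [^]\<^bsub>M\<^esub> (s::nat))"
  unfolding indep_def
proof (intro allI impI)
  fix x i :: int assume h: "m1 [^]\<^bsub>M\<^esub> x \<otimes>\<^bsub>M\<^esub> (m2 \<otimes>\<^bsub>M\<^esub> m1 [^]\<^bsub>M\<^esub> s) [^]\<^bsub>M\<^esub> i = \<one>\<^bsub>M\<^esub>"
  have e: "m1 [^]\<^bsub>M\<^esub> s = m1 [^]\<^bsub>M\<^esub> (int s)" by (simp add: int_pow_int)
  have "m1 [^]\<^bsub>M\<^esub> x \<otimes>\<^bsub>M\<^esub> (m2 \<otimes>\<^bsub>M\<^esub> m1 [^]\<^bsub>M\<^esub> s) [^]\<^bsub>M\<^esub> i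
      = (m1 [^]\<^bsub>M\<^esub> x \<otimes>\<^bsub>M\<^esub> (m1 [^]\<^bsub>M\<^esub> (int s)) [^]\<^bsub>M\<^esub> i) \<otimes>\<^bsub>M\<^esub> m2 [^]\<^bsub>M\<^esub> i"
    using m1c m2c by (simp add: e M.int_pow_distrib M.m_ac)
  also have "\<dots> = m1 [^]\<^bsub>M\<^esub> (x + int s * i) \<otimes>\<^bsub>M\<^esub> m2 [^]\<^bsub>M\<^esub> i"
    using m1c by (simp add: M.int_pow_mult M.int_pow_pow)
  finally have "m1 [^]\<^bsub>M\<^esub> (x + int s * i) \<otimes>\<^bsub>M\<^esub> m2 [^]\<^bsub>M\<^esub> i = \<one>\<^bsub>M\<^esub>" using h by simp
  then have d: "int p dvd x + int s * i" "int p dvd i" using indep12 unfolding indep_def by blast+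
  then have "int p dvd int s * i" by simp
  then have "int p dvd (x + int s * i) - int s * i" using d(1) by (rule dvd_diff[rotated])
  then show "int p dvd x \<and> int p dvd i" using d(2) by simp
qed

lemma phi_yz:
  assumes "y \<in> carrier G" "z \<in> carrier G"
  shows "phi (y [^] (x::int) \<otimes> z [^] (i::int)) = phi y [^]\<^bsub>M\<^esub> x \<otimes>\<^bsub>M\<^esub> phi z [^]\<^bsub>M\<^esub> i"
  using assms by (simp add: phi_mult phi_ipow)

lemma M_diff:
  assumes u: "u \<in> carrier M" and v: "v \<in> carrier M"
    and eq: "u [^]\<^bsub>M\<^esub> (x::int) \<otimes>\<^bsub>M\<^esub> v [^]\<^bsub>M\<^esub> (i::int) = u [^]\<^bsub>M\<^esub> x' \<otimes>\<^bsub>M\<^esub> v [^]\<^bsub>M\<^esub> i'"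
  shows "u [^]\<^bsub>M\<^esub> (x - x') \<otimes>\<^bsub>M\<^esub> v [^]\<^bsub>M\<^esub> (i - i') = \<one>\<^bsub>M\<^esub>"
proof -
  have "u [^]\<^bsub>M\<^esub> (x - x') \<otimes>\<^bsub>M\<^esub> v [^]\<^bsub>M\<^esub> (i - i')
     = (u [^]\<^bsub>M\<^esub> x \<otimes>\<^bsub>M\<^esub> v [^]\<^bsub>M\<^esub> i) \<otimes>\<^bsub>M\<^esub> inv\<^bsub>M\<^esub> (u [^]\<^bsub>M\<^esub> x' \<otimes>\<^bsub>M\<^esub> v [^]\<^bsub>M\<^esub> i')"
    using u v by (simp add: M.int_pow_diff M.inv_mult M.m_ac)
  also have "\<dots> = \<one>\<^bsub>M\<^esub>" using u v by (simp add: eq)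
  finally show ?thesis .
qed

lemma inj_yz:
  assumes y: "y \<in> carrier G" and z: "z \<in> carrier G" and ind: "indep (phi y) (phi z)" and q: "0 < q"
    and ydiv: "\<And>d. int p dvd d \<Longrightarrow> y [^] d = \<one> \<Longrightarrow> q dvd d"
  shows "inj_on (\<lambda>(x,i). y [^] x \<otimes> z [^] i) ({0..<q} \<times> {0..<int p})"
proof (rule inj_onI, clarify)
  fix x i x' i' :: int
  assume r: "x \<in> {0..<q}" "i \<in> {0..<int p}" "x' \<in> {0..<q}" "i' \<in> {0..<int p}"
    and eq: "y [^] x \<otimes> z [^] i = y [^] x' \<otimes> z [^] i'"
  have "phi y [^]\<^bsub>M\<^esub> x \<otimes>\<^bsub>M\<^esub> phi z [^]\<^bsub>M\<^esub> i = phi y [^]\<^bsub>M\<^esub> x' \<otimes>\<^bsub>M\<^esub> phi z [^]\<^bsub>M\<^esub> i'"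
    using eq phi_yz[OF y z] by metis
  then have "phi y [^]\<^bsub>M\<^esub> (x - x') \<otimes>\<^bsub>M\<^esub> phi z [^]\<^bsub>M\<^esub> (i - i') = \<one>\<^bsub>M\<^esub>"
    using M_diff phi_c y z by blast
  then have d: "int p dvd x - x'" "int p dvd i - i'" using ind unfolding indep_def by blast+
  have ii: "i = i'" using dvd_range_eq[OF r(2) r(4) d(2)] .
  then have "y [^] x = y [^] x'" using eq y z G.r_cancel[of "z [^] i'" "y [^] x" "y [^] x'"] by simp
  then have "y [^] (x - x') = \<one>" using y by (simp add: G.int_pow_diff)
  then have "q dvd x - x'" using ydiv d(1) by blast
  then show "x = x' \<and> i = i'" using dvd_range_eq[OF r(1) r(3)] ii by blast
qed

lemma gen_eq:
  assumes "y \<in> generate G {x1, x2}" "z \<in> generate G {x1, x2}"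
    "x1 \<in> generate G {y, z}" "x2 \<in> generate G {y, z}"
    "y \<in> carrier G" "z \<in> carrier G"
  shows "generate G {y, z} = generate G {x1, x2}"
proof
  show "generate G {y, z} \<subseteq> generate G {x1, x2}"
    by (rule G.generate_subgroup_incl) (use assms G.generate_is_subgroup x1 x2 in auto)
  show "generate G {x1, x2} \<subseteq> generate G {y, z}"
    by (rule G.generate_subgroup_incl) (use assms G.generate_is_subgroup in auto)
qed

lemma lift_ord:
  assumes g: "g \<in> carrier G" and gp: "g [^] p = \<one>" and ng: "phi g \<noteq> \<one>\<^bsub>M\<^esub>"
    and x: "x \<in> carrier G" and px: "phi x = phi g"
  shows "G.ord x = p"
proof -
  define k where "k = inv g \<otimes> x"
  have kc: "k \<in> carrier G" using g x by (simp add: k_def)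
  have kK: "k \<in> K" using g x px by (intro K_in) (auto simp: k_def phi_mult phi_inv phi_c)
  have xk: "x = g \<otimes> k" using g x by (simp add: k_def G.lcanc2)
  have comm: "g \<otimes> k = k \<otimes> g" using central[OF kK g x_pp[OF g]] by simp
  have "x [^] p = g [^] p \<otimes> k [^] p" using xk G.pow_mult_distrib[OF comm g kc] by simp
  then have "x [^] p = \<one>" using gp K_powp[OF kK] by simp
  then have "G.ord x dvd p" using G.pow_eq_id[OF x] by simp
  then have "G.ord x = 1 \<or> G.ord x = p" using pr by (simp add: prime_nat_iff)
  moreover have "x \<noteq> \<one>" using ng px group_hom.hom_one[OF gh] by auto
  ultimately show ?thesis using G.ord_eq_1[OF x] by blast
qed

lemma m1_ne: "m1 \<noteq> \<one>\<^bsub>M\<^esub>"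
proof
  assume "m1 = \<one>\<^bsub>M\<^esub>"
  then have "m1 [^]\<^bsub>M\<^esub> (1::int) \<otimes>\<^bsub>M\<^esub> m2 [^]\<^bsub>M\<^esub> (0::int) = \<one>\<^bsub>M\<^esub>" by simp
  then have "int p dvd 1" using indep12 unfolding indep_def by blast
  then show False using p1 by simp
qed

lemma m2_ne: "m2 \<noteq> \<one>\<^bsub>M\<^esub>"
proof
  assume "m2 = \<one>\<^bsub>M\<^esub>"
  then have "m2 [^]\<^bsub>M\<^esub> (1::int) \<otimes>\<^bsub>M\<^esub> m1 [^]\<^bsub>M\<^esub> (0::int) = \<one>\<^bsub>M\<^esub>" by simp
  then have "int p dvd 1" using indep21 unfolding indep_def by blast
  then show False using p1 by simp
qed

end


context L begin

lemma ucase_gen: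
  fixes H :: "(int \<times> int) monoid" and r :: int
  assumes y: "y \<in> carrier G" and z: "z \<in> carrier G" and yK: "y [^] p \<in> K" and yn: "y [^] p \<noteq> \<one>"
    and zp: "z [^] p = \<one>" and ind: "indep (phi y) (phi z)"
    and cj: "z \<otimes> y \<otimes> inv z = y [^] r"
    and cH: "carrier H = {0..<int p ^ 2} \<times> {0..<int p}"
    and mH: "\<And>x i u j. x \<in> {0..<int p ^ 2} \<Longrightarrow> i \<in> {0..<int p} \<Longrightarrow> u \<in> {0..<int p ^ 2} \<Longrightarrow> j \<in> {0..<int p} \<Longrightarrow>
        (x,i) \<otimes>\<^bsub>H\<^esub> (u,j) = ((x + r ^ nat i * u + 0 * ((i + j) div int p)) mod (int p ^ 2), (i + j) mod int p)"
  shows "G\<lparr>carrier := generate G {y,z}\<rparr> \<cong> H"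
proof (rule G.gen_iso[OF y z _ _ _ _ cj cH mH])
  show "1 < int p ^ 2" using p1 by (metis less_1_mult of_nat_1 of_nat_less_iff power2_eq_square)
  show "1 < int p" using p1 by simp
  have "y [^] (int p ^ 2) = y [^] (p * p)"
    by (metis int_pow_int of_nat_mult power2_eq_square)
  then show "y [^] (int p ^ 2) = \<one>" using x_pp[OF y] by simp
  show "z [^] (int p) = y [^] (0::int)" using zp by (simp add: int_pow_int)
  show "inj_on (\<lambda>(x, i). y [^] x \<otimes> z [^] i) ({0..<int p ^ 2} \<times> {0..<int p})"
  proof (rule inj_yz[OF y z ind])
    show "0 < int p ^ 2" using p0 by simp
    fix d assume pd: "int p dvd d" and yd: "y [^] d = \<one>"
    then obtain s where s: "d = int p * s" by (auto elim: dvdE)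
    have "y [^] d = (y [^] (int p)) [^] s" using y s by (simp add: G.int_pow_pow)
    also have "\<dots> = (y [^] p) [^] s" by (simp add: int_pow_int)
    finally have "(y [^] p) [^] s = \<one>" using yd by simp
    then have "int p dvd s" using K_ord_dvd[OF yK yn] by simp
    then show "int p ^ 2 dvd d" using s by (simp add: power2_eq_square)
  qed
qed

lemma Zmod_cH: "carrier (Zmod (p ^ 2) \<times>\<times> Zmod p) = {0..<int p ^ 2} \<times> {0..<int p}"
  using p0 by (simp add: DirProd_def carrier_integer_mod_group)

lemma Zmod_mH: "(x,i) \<otimes>\<^bsub>Zmod (p ^ 2) \<times>\<times> Zmod p\<^esub> (u,j) =
   ((x + 1 ^ nat i * u + 0 * ((i + j) div int p)) mod (int p ^ 2), (i + j) mod int p)"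
  by (simp add: DirProd_def)

lemma U_cH: "carrier (U_grp p a) = {0..<int p ^ 2} \<times> {0..<int p}"
  by (simp add: U_grp_def)

lemma U_mH: "(x,i) \<otimes>\<^bsub>U_grp p a\<^esub> (u,j) =
   ((x + (1 + a * int p) ^ nat i * u + 0 * ((i + j) div int p)) mod (int p ^ 2), (i + j) mod int p)"
  by (simp add: U_grp_def)

lemma ucase:
  assumes y: "y \<in> carrier G" and z: "z \<in> carrier G" and yK: "y [^] p \<in> K" and yn: "y [^] p \<noteq> \<one>"
    and zp: "z [^] p = \<one>" and ind: "indep (phi y) (phi z)"
  shows "(z \<otimes> y = y \<otimes> z \<longrightarrow> G\<lparr>carrier := generate G {y,z}\<rparr> \<cong> Zmod (p ^ 2) \<times>\<times> Zmod p)
    \<and> (G\<lparr>carrier := generate G {y,z}\<rparr> \<cong> Zmod (p ^ 2) \<times>\<times> Zmod p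
       \<or> (\<exists>a. coprime a (int p) \<and> G\<lparr>carrier := generate G {y,z}\<rparr> \<cong> U_grp p a))"
proof -
  define d where "d = z \<otimes> y \<otimes> inv z \<otimes> inv y"
  have dc: "d \<in> carrier G" using y z by (simp add: d_def)
  have "phi d = (phi z \<otimes>\<^bsub>M\<^esub> inv\<^bsub>M\<^esub> phi z) \<otimes>\<^bsub>M\<^esub> (phi y \<otimes>\<^bsub>M\<^esub> inv\<^bsub>M\<^esub> phi y)"
    using y z phi_c by (simp add: d_def phi_mult phi_inv M.m_ac)
  then have "phi d = \<one>\<^bsub>M\<^esub>" using y z phi_c by simp
  then have dK: "d \<in> K" using dc K_in by blast
  have wd: "z \<otimes> y \<otimes> inv z = d \<otimes> y" using y z by (simp add: d_def G.m_assoc)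
  have ab: "G\<lparr>carrier := generate G {y,z}\<rparr> \<cong> Zmod (p ^ 2) \<times>\<times> Zmod p" if d1: "d = \<one>"
  proof (rule ucase_gen[OF y z yK yn zp ind _ Zmod_cH Zmod_mH])
    show "z \<otimes> y \<otimes> inv z = y [^] (1::int)" using wd d1 y by simp
  qed
  have comm_d: "d = \<one>" if "z \<otimes> y = y \<otimes> z"
    using that y z by (simp add: d_def G.m_assoc)
  have "G\<lparr>carrier := generate G {y,z}\<rparr> \<cong> Zmod (p ^ 2) \<times>\<times> Zmod p
       \<or> (\<exists>a. coprime a (int p) \<and> G\<lparr>carrier := generate G {y,z}\<rparr> \<cong> U_grp p a)"
  proof (cases "d = \<one>")
    case True then show ?thesis using ab by blast
  next
    case False
    obtain w :: int where w: "d = (y [^] p) [^] w" using K_elem[OF yK yn dK] by blast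
    have "\<not> int p dvd w" using False w K_ord_dvd[OF yK yn] by simp
    then have cop: "coprime w (int p)"
      using prime_imp_coprime[of "int p" w] pr by (simp add: coprime_commute)
    have "d \<otimes> y = y [^] (int p * w) \<otimes> y [^] (1::int)"
      using w y by (simp add: G.int_pow_pow int_pow_int[symmetric])
    also have "\<dots> = y [^] (int p * w + 1)" using G.int_pow_mult[OF y, of "int p * w" 1] by simp
    also have "int p * w + 1 = 1 + w * int p" by simp
    finally have cj: "z \<otimes> y \<otimes> inv z = y [^] (1 + w * int p)" using wd by simp
    have "G\<lparr>carrier := generate G {y,z}\<rparr> \<cong> U_grp p w"
      by (rule ucase_gen[OF y z yK yn zp ind cj U_cH U_mH])
    then show ?thesis using cop by blast
  qed
  then show ?thesis using ab comm_d by blast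
qed

end


context L begin

definition cc where "cc = x1 \<otimes> x2 \<otimes> inv x1 \<otimes> inv x2"

lemma ccc: "cc \<in> carrier G" using x1 x2 by (simp add: cc_def)

lemma ccK: "cc \<in> K"
proof (rule K_in[OF ccc])
  have "phi cc = m1 \<otimes>\<^bsub>M\<^esub> m2 \<otimes>\<^bsub>M\<^esub> inv\<^bsub>M\<^esub> m1 \<otimes>\<^bsub>M\<^esub> inv\<^bsub>M\<^esub> m2"
    using x1 x2 by (simp add: cc_def phi_mult phi_inv)
  also have "\<dots> = (m1 \<otimes>\<^bsub>M\<^esub> m2) \<otimes>\<^bsub>M\<^esub> inv\<^bsub>M\<^esub> (m1 \<otimes>\<^bsub>M\<^esub> m2)"
    using m1c m2c by (simp add: M.inv_mult M.m_assoc)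
  also have "\<dots> = \<one>\<^bsub>M\<^esub>" using m1c m2c by simp
  finally show "phi cc = \<one>\<^bsub>M\<^esub>" .
qed

lemma cc1: "cc \<otimes> x1 = x1 \<otimes> cc" using central1[OF ccK] .
lemma cc2: "cc \<otimes> x2 = x2 \<otimes> cc" using central2[OF ccK] .

lemma crel: "x1 \<otimes> x2 = x2 \<otimes> x1 \<otimes> cc"
proof -
  have "cc \<otimes> (x2 \<otimes> x1) = (x1 \<otimes> x2 \<otimes> inv x1) \<otimes> (inv x2 \<otimes> (x2 \<otimes> x1))"
    unfolding cc_def by (rule G.m_assoc) (use x1 x2 in auto)
  also have "inv x2 \<otimes> (x2 \<otimes> x1) = x1" by (rule G.lcanc1[OF x2 x1])
  also have "(x1 \<otimes> x2 \<otimes> inv x1) \<otimes> x1 = x1 \<otimes> x2" using x1 x2 by (simp add: G.m_assoc)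
  finally have "cc \<otimes> (x2 \<otimes> x1) = x1 \<otimes> x2" .
  moreover have "cc \<otimes> (x2 \<otimes> x1) = x2 \<otimes> x1 \<otimes> cc"
    using x1 x2 ccc cc1 cc2 by (metis G.m_assoc)
  ultimately show ?thesis by simp
qed

lemma cgen: "cc \<in> generate G {x1, x2}"
proof -
  have s: "subgroup (generate G {x1, x2}) G" using G.generate_is_subgroup x1 x2 by simp
  have "x1 \<in> generate G {x1, x2}" "x2 \<in> generate G {x1, x2}" by (auto intro: generate.incl)
  then show ?thesis using s by (simp add: cc_def subgroup.m_closed subgroup.m_inv_closed)
qed

lemma inv_self: "a \<in> carrier G \<Longrightarrow> a \<otimes> a = \<one> \<Longrightarrow> inv a = a"
  using G.inv_equality by blast

lemma sq2: "a \<in> carrier G \<Longrightarrow> a [^] (2::nat) = a \<otimes> a"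
  by (simp add: numeral_2_eq_2)

lemma Zp_iso:
  assumes a1: "x1 [^] p = \<one>" and a2: "x2 [^] p = \<one>" and c1: "cc = \<one>"
  shows "G\<lparr>carrier := generate G {x1, x2}\<rparr> \<cong> Zmod p \<times>\<times> Zmod p"
proof (rule G.gen_iso[OF x1 x2, where r = 1 and t = 0])
  show "1 < int p" using p1 by simp
  then show "1 < int p" .
  show "x1 [^] (int p) = \<one>" using a1 by (simp add: int_pow_int)
  show "x2 [^] (int p) = x1 [^] (0::int)" using a2 by (simp add: int_pow_int)
  have cm: "x1 \<otimes> x2 = x2 \<otimes> x1" using crel c1 x1 x2 by simp
  have "x2 \<otimes> x1 \<otimes> inv x2 = x1 \<otimes> x2 \<otimes> inv x2" using cm by simp
  also have "\<dots> = x1" using x1 x2 by (simp add: G.m_assoc)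
  finally show "x2 \<otimes> x1 \<otimes> inv x2 = x1 [^] (1::int)" using x1 by simp
  show "carrier (Zmod p \<times>\<times> Zmod p) = {0..<int p} \<times> {0..<int p}"
    using p0 by (simp add: DirProd_def carrier_integer_mod_group)
  show "(x, i) \<otimes>\<^bsub>Zmod p \<times>\<times> Zmod p\<^esub> (u, j) =
        ((x + 1 ^ nat i * u + 0 * ((i + j) div int p)) mod int p, (i + j) mod int p)" for x i u j
    by (simp add: DirProd_def)
  show "inj_on (\<lambda>(x, i). x1 [^] x \<otimes> x2 [^] i) ({0..<int p} \<times> {0..<int p})"
    by (rule inj_yz[OF x1 x2 indep12]) (use p0 in auto)
qed

lemma D4_iso:
  assumes a1: "x1 [^] p = \<one>" and a2: "x2 [^] p = \<one>" and c1: "cc \<noteq> \<one>" and p2: "p = 2"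
  shows "G\<lparr>carrier := generate G {x1, x2}\<rparr> \<cong> D4_grp"
proof -
  define y where "y = x1 \<otimes> x2"
  have y: "y \<in> carrier G" using x1 x2 by (simp add: y_def)
  have x11: "x1 \<otimes> x1 = \<one>" using a1 p2 sq2[OF x1] by simp
  have x22: "x2 \<otimes> x2 = \<one>" using a2 p2 sq2[OF x2] by simp
  have x11w: "x1 \<otimes> (x1 \<otimes> w) = w" if "w \<in> carrier G" for w
    using that x1 x11 by (simp add: G.m_assoc[symmetric])
  have x22w: "x2 \<otimes> (x2 \<otimes> w) = w" if "w \<in> carrier G" for w
    using that x2 x22 by (simp add: G.m_assoc[symmetric])
  have "y \<otimes> y = (x2 \<otimes> x1 \<otimes> cc) \<otimes> (x1 \<otimes> x2)" using crel by (simp add: y_def)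
  also have "\<dots> = x2 \<otimes> x1 \<otimes> (cc \<otimes> x1) \<otimes> x2" using x1 x2 ccc by (simp add: G.m_assoc)
  also have "\<dots> = x2 \<otimes> (x1 \<otimes> (x1 \<otimes> (cc \<otimes> x2)))" using x1 x2 ccc by (simp add: cc1 G.m_assoc)
  also have "\<dots> = x2 \<otimes> (x2 \<otimes> cc)" using x1 x2 ccc by (simp add: x11w cc2)
  also have "\<dots> = cc" using x2 ccc by (simp add: x22w)
  finally have yy: "y \<otimes> y = cc" .
  have y2: "y [^] (2::int) = cc" using yy sq2[OF y] by (simp add: int_pow_int[symmetric])
  have cK2: "cc [^] (2::int) = \<one>" using K_ipowp[OF ccK] p2 by simp
  have geq: "generate G {y, x1} = generate G {x1, x2}"
  proof (rule gen_eq[OF _ _ _ _ y x1])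
    have s: "subgroup (generate G {x1, x2}) G" using G.generate_is_subgroup x1 x2 by simp
    have "x1 \<in> generate G {x1, x2}" "x2 \<in> generate G {x1, x2}" by (auto intro: generate.incl)
    then show "y \<in> generate G {x1, x2}" "x1 \<in> generate G {x1, x2}"
      using s by (auto simp: y_def subgroup.m_closed)
    have s2: "subgroup (generate G {y, x1}) G" using G.generate_is_subgroup x1 y by simp
    have i: "x1 \<in> generate G {y, x1}" "y \<in> generate G {y, x1}" by (auto intro: generate.incl)
    then show "x1 \<in> generate G {y, x1}" by simp
    have "inv x1 \<otimes> y \<in> generate G {y, x1}" using s2 i by (simp add: subgroup.m_closed subgroup.m_inv_closed)
    moreover have "inv x1 \<otimes> y = x2" using x1 x2 by (simp add: y_def G.lcanc1)
    ultimately show "x2 \<in> generate G {y, x1}" by simp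
  qed
  have "G\<lparr>carrier := generate G {y, x1}\<rparr> \<cong> D4_grp"
  proof (rule G.gen_iso[OF y x1, where q = 4 and pp = 2 and r = "-1" and t = 0])
    show "(1::int) < 4" by simp
    show "(1::int) < 2" by simp
    have "y [^] (4::int) = (y [^] (2::int)) [^] (2::int)" using y by (simp add: G.int_pow_pow)
    then show "y [^] (4::int) = \<one>" using y2 cK2 by simp
    show "x1 [^] (2::int) = y [^] (0::int)" using x11 sq2[OF x1] by (simp add: int_pow_int[symmetric])
    have "x1 \<otimes> y \<otimes> inv x1 = x2 \<otimes> x1"
      using x1 x2 x11 inv_self[OF x1 x11] by (simp add: y_def G.m_assoc x11w)
    also have "\<dots> = inv y" using x1 x2 inv_self[OF x1 x11] inv_self[OF x2 x22]
      by (simp add: y_def G.inv_mult_group)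
    finally show "x1 \<otimes> y \<otimes> inv x1 = y [^] (-1::int)" using y by (simp add: G.int_pow_neg)
    show "carrier D4_grp = {0..<4} \<times> {0..<2}" by (simp add: D4_grp_def)
    show "(x, i) \<otimes>\<^bsub>D4_grp\<^esub> (u, j) = ((x + (- 1) ^ nat i * u + 0 * ((i + j) div 2)) mod 4, (i + j) mod 2)"
      for x i u j by (simp add: D4_grp_def)
    have "inj_on (\<lambda>(x, i). y [^] x \<otimes> x1 [^] i) ({0..<(4::int)} \<times> {0..<int p})"
    proof (rule inj_yz[OF y x1])
      show "indep (phi y) (phi x1)" using indep_D4 x1 x2 by (simp add: y_def phi_mult)
      show "(0::int) < 4" by simp
      fix d assume pd: "int p dvd d" and yd: "y [^] d = \<one>"
      then obtain s where s: "d = 2 * s" using p2 by (auto elim: dvdE)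
      have "y [^] d = cc [^] s" using y s y2 by (simp add: G.int_pow_pow[symmetric])
      then have cs: "cc [^] s = \<one>" using yd by simp
      have "int p dvd s" using K_ord_dvd[OF ccK c1] cs by blast
      then show "4 dvd d" using s p2 by auto
    qed
    then show "inj_on (\<lambda>(x, i). y [^] x \<otimes> x1 [^] i) ({0..<(4::int)} \<times> {0..<(2::int)})" using p2 by simp
  qed
  then show ?thesis using geq by simp
qed

end


lemma natpow_conv: "(0::int) \<le> b \<Longrightarrow> g [^]\<^bsub>H\<^esub> (nat b) = g [^]\<^bsub>H\<^esub> b"
  using int_pow_int[of H g "nat b"] by simp

context L begin

lemma Heis_case:
  assumes a1: "x1 [^] p = \<one>" and a2: "x2 [^] p = \<one>" and c1: "cc \<noteq> \<one>"
  shows "G\<lparr>carrier := generate G {x1, x2}\<rparr> \<cong> Heis_grp p \<and> generate G {cc} = generate G {x1, x2} \<inter> K"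
proof
  define e where "e = inv cc"
  have eK: "e \<in> K" using subK ccK by (simp add: e_def subgroup.m_inv_closed)
  have ec: "e \<in> carrier G" using eK Kc by blast
  have en: "e \<noteq> \<one>" using c1 ccc by (metis G.inv_inv G.inv_one e_def)
  have pe: "phi e = \<one>\<^bsub>M\<^esub>" using eK by (simp add: kernel_def)
  show "G\<lparr>carrier := generate G {x1, x2}\<rparr> \<cong> Heis_grp p"
  proof (rule G.heis_iso[OF x1 x2 ec])
    show "1 < int p" using p1 by simp
    show "x1 [^] int p = \<one>" using a1 by (simp add: int_pow_int)
    show "x2 [^] int p = \<one>" using a2 by (simp add: int_pow_int)
    show "e [^] int p = \<one>" using K_ipowp[OF eK] .
    have "x1 \<otimes> x2 \<otimes> e = x2 \<otimes> x1 \<otimes> cc \<otimes> inv cc" using crel by (simp add: e_def)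
    also have "\<dots> = x2 \<otimes> x1" using x1 x2 ccc by (simp add: G.m_assoc)
    finally show "x2 \<otimes> x1 = x1 \<otimes> x2 \<otimes> e" by simp
    show "e \<otimes> x1 = x1 \<otimes> e" using central1[OF eK] .
    show "e \<otimes> x2 = x2 \<otimes> e" using central2[OF eK] .
    have s: "subgroup (generate G {x1, x2}) G" using G.generate_is_subgroup x1 x2 by simp
    show "e \<in> generate G {x1, x2}" using cgen s by (simp add: e_def subgroup.m_inv_closed)
    show "carrier (Heis_grp p) = {0..<int p} \<times> {0..<int p} \<times> {0..<int p}"
      by (simp add: Heis_grp_def)
    show "(a, b, c) \<otimes>\<^bsub>Heis_grp p\<^esub> (a', b', c') =
        ((a + a') mod int p, (b + b') mod int p, (c + c' + a * b') mod int p)" for a b c a' b' c'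
      by (simp add: Heis_grp_def)
    show "inj_on (\<lambda>(a, b, c). x1 [^] nat b \<otimes> x2 [^] nat a \<otimes> e [^] nat c)
        ({0..<int p} \<times> {0..<int p} \<times> {0..<int p})"
    proof (rule inj_onI)
      fix U V assume U: "U \<in> {0..<int p} \<times> {0..<int p} \<times> {0..<int p}"
        and V: "V \<in> {0..<int p} \<times> {0..<int p} \<times> {0..<int p}"
        and eqUV: "(\<lambda>(a, b, c). x1 [^] nat b \<otimes> x2 [^] nat a \<otimes> e [^] nat c) U =
                   (\<lambda>(a, b, c). x1 [^] nat b \<otimes> x2 [^] nat a \<otimes> e [^] nat c) V"
      obtain a b c where Ud: "U = (a, b, c)" by (cases U) auto
      obtain a' b' c' where Vd: "V = (a', b', c')" by (cases V) auto
      have r: "a \<in> {0..<int p}" "b \<in> {0..<int p}" "c \<in> {0..<int p}"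
        "a' \<in> {0..<int p}" "b' \<in> {0..<int p}" "c' \<in> {0..<int p}" using U V Ud Vd by auto
      have eq: "x1 [^] nat b \<otimes> x2 [^] nat a \<otimes> e [^] nat c = x1 [^] nat b' \<otimes> x2 [^] nat a' \<otimes> e [^] nat c'"
        using eqUV Ud Vd by simp
      have ph: "phi (x1 [^] nat b \<otimes> x2 [^] nat a \<otimes> e [^] nat c) = m1 [^]\<^bsub>M\<^esub> b \<otimes>\<^bsub>M\<^esub> m2 [^]\<^bsub>M\<^esub> a"
        if "0 \<le> a" "0 \<le> b" for a b c
        using that x1 x2 ec m1c m2c by (simp add: phi_mult phi_npow phi_ipow pe natpow_conv)
      have "m1 [^]\<^bsub>M\<^esub> b \<otimes>\<^bsub>M\<^esub> m2 [^]\<^bsub>M\<^esub> a = m1 [^]\<^bsub>M\<^esub> b' \<otimes>\<^bsub>M\<^esub> m2 [^]\<^bsub>M\<^esub> a'"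
        using ph[of a b c] ph[of a' b' c'] eq r by simp
      then have "m1 [^]\<^bsub>M\<^esub> (b - b') \<otimes>\<^bsub>M\<^esub> m2 [^]\<^bsub>M\<^esub> (a - a') = \<one>\<^bsub>M\<^esub>"
        using M_diff m1c m2c by blast
      then have d: "int p dvd b - b'" "int p dvd a - a'" using indep12 unfolding indep_def by blast+
      have bb: "b = b'" using dvd_range_eq[OF r(2) r(5) d(1)] .
      have aa: "a = a'" using dvd_range_eq[OF r(1) r(4) d(2)] .
      have "e [^] nat c = e [^] nat c'"
        using eq x1 x2 ec unfolding aa bb by (simp add: G.m_assoc)
      then have "e [^] c = e [^] c'" using r by (simp add: natpow_conv)
      then have "e [^] (c - c') = \<one>" using ec by (simp add: G.int_pow_diff)
      then have "int p dvd c - c'" using K_ord_dvd[OF eK en] by blast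
      then have "c = c'" using dvd_range_eq[OF r(3) r(6)] by blast
      then show "U = V" using aa bb Ud Vd by simp
    qed
  qed
  have gK: "generate G {cc} = K" using K_gen(1)[OF ccK c1] .
  have "generate G {cc} \<subseteq> generate G {x1, x2}"
    by (rule G.generate_subgroup_incl) (use cgen G.generate_is_subgroup x1 x2 in auto)
  then show "generate G {cc} = generate G {x1, x2} \<inter> K" using gK by blast
qed

lemma K2:
  assumes p2: "p = 2" and k: "k \<in> K" "k \<noteq> \<one>" and k': "k' \<in> K" "k' \<noteq> \<one>"
  shows "k = k'"
proof (rule ccontr)
  assume ne: "k \<noteq> k'"
  have "{\<one>, k, k'} \<subseteq> K" using k k' oneK by auto
  then have "card {\<one>, k, k'} \<le> card K" using finK by (rule card_mono[rotated])
  moreover have "card {\<one>, k, k'} = 3" using ne k k' by auto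
  ultimately show False using kcard p2 by simp
qed

lemma Q8_iso:
  assumes a1: "x1 [^] p \<noteq> \<one>" and a2: "x2 [^] p \<noteq> \<one>" and c1: "cc \<noteq> \<one>" and p2: "p = 2"
  shows "G\<lparr>carrier := generate G {x1, x2}\<rparr> \<cong> Q8_grp"
proof -
  define a where "a = x1 [^] p"
  have aK: "a \<in> K" using K_powin[OF x1] by (simp add: a_def)
  have ac: "a \<in> carrier G" using aK Kc by blast
  have ba: "x2 [^] p = a" using K2[OF p2 K_powin[OF x2] a2 aK] a1 by (simp add: a_def)
  have ca: "cc = a" using K2[OF p2 ccK c1 aK] a1 by (simp add: a_def)
  have x11: "x1 \<otimes> x1 = a" using p2 sq2[OF x1] by (simp add: a_def)
  have x1i2: "x1 [^] (2::int) = a" using p2 by (simp add: a_def int_pow_int[symmetric])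
  show ?thesis
  proof (rule G.gen_iso[OF x1 x2, where q = 4 and pp = 2 and r = "-1" and t = 2])
    show "(1::int) < 4" by simp
    show "(1::int) < 2" by simp
    have "x1 [^] (4::int) = (x1 [^] (2::int)) [^] (2::int)" using x1 by (simp add: G.int_pow_pow)
    then show "x1 [^] (4::int) = \<one>" using x1i2 K_ipowp[OF aK] p2 by simp
    show "x2 [^] (2::int) = x1 [^] (2::int)" using ba x1i2 p2 by (simp add: int_pow_int[symmetric])
    define W where "W = x2 \<otimes> x1 \<otimes> inv x2"
    have Wc: "W \<in> carrier G" using x1 x2 by (simp add: W_def)
    have "inv cc = W \<otimes> inv x1" using x1 x2
      by (simp add: cc_def W_def G.inv_mult_group G.m_assoc)
    then have "W = inv cc \<otimes> x1" using G.inv_solve_right[of "inv cc" W x1] x1 Wc ccc by simp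
    then have "W \<otimes> x1 = inv cc \<otimes> (x1 \<otimes> x1)" using x1 ccc by (simp add: G.m_assoc)
    also have "\<dots> = \<one>" using x11 ca ac by simp
    finally have "inv x1 = W" using G.inv_equality x1 Wc by blast
    then show "x2 \<otimes> x1 \<otimes> inv x2 = x1 [^] (- 1::int)" using x1 by (simp add: W_def G.int_pow_neg)
    show "carrier Q8_grp = {0..<4} \<times> {0..<2}" by (simp add: Q8_grp_def)
    show "(x, i) \<otimes>\<^bsub>Q8_grp\<^esub> (u, j) = ((x + (- 1) ^ nat i * u + 2 * ((i + j) div 2)) mod 4, (i + j) mod 2)"
      if "x \<in> {0..<4}" "i \<in> {0..<2}" "u \<in> {0..<4}" "j \<in> {0..<2}" for x i u j
    proof -
      have "i = 0 \<or> i = 1" "j = 0 \<or> j = 1" using that by auto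
      then have h: "i * j = (i + j) div 2" by auto
      show ?thesis by (simp add: Q8_grp_def mult.assoc h)
    qed
    have "inj_on (\<lambda>(x, i). x1 [^] x \<otimes> x2 [^] i) ({0..<(4::int)} \<times> {0..<int p})"
    proof (rule inj_yz[OF x1 x2 indep12])
      show "(0::int) < 4" by simp
      fix d assume pd: "int p dvd d" and yd: "x1 [^] d = \<one>"
      then obtain s where s: "d = 2 * s" using p2 by (auto elim: dvdE)
      have "x1 [^] d = a [^] s" using x1 s x1i2 by (simp add: G.int_pow_pow[symmetric])
      then have cs: "a [^] s = \<one>" using yd by simp
      have an: "a \<noteq> \<one>" using a1 by (simp add: a_def)
      have "int p dvd s" using K_ord_dvd[OF aK an] cs by blast
      then show "4 dvd d" using s p2 by auto
    qed
    then show "inj_on (\<lambda>(x, i). x1 [^] x \<otimes> x2 [^] i) ({0..<(4::int)} \<times> {0..<(2::int)})" using p2 by simp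
  qed
qed

end


context L begin

lemma Zsq_case:
  assumes a1: "x1 [^] p \<noteq> \<one>" and a2: "x2 [^] p \<noteq> \<one>" and h: "cc = \<one> \<or> p \<noteq> 2"
  shows "(cc = \<one> \<longrightarrow> G\<lparr>carrier := generate G {x1, x2}\<rparr> \<cong> Zmod (p ^ 2) \<times>\<times> Zmod p)
    \<and> (G\<lparr>carrier := generate G {x1, x2}\<rparr> \<cong> Zmod (p ^ 2) \<times>\<times> Zmod p
       \<or> (\<exists>a. coprime a (int p) \<and> G\<lparr>carrier := generate G {x1, x2}\<rparr> \<cong> U_grp p a))"
proof -
  define a where "a = x1 [^] p"
  define b where "b = x2 [^] p"
  have aK: "a \<in> K" using K_powin[OF x1] by (simp add: a_def)
  have bK: "b \<in> K" using K_powin[OF x2] by (simp add: b_def)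
  have ac: "a \<in> carrier G" using aK Kc by blast
  have bc: "b \<in> carrier G" using bK Kc by blast
  have an: "a \<noteq> \<one>" using a1 by (simp add: a_def)
  have ibK: "inv b \<in> K" using subK bK by (simp add: subgroup.m_inv_closed)
  obtain w :: int where w: "inv b = a [^] w" using K_elem[OF aK an ibK] by blast
  define s where "s = nat (w mod int p)"
  have "a [^] s = a [^] (int s)" by (simp add: int_pow_int)
  also have "int s = w mod int p" using p0 by (simp add: s_def)
  also have "a [^] (w mod int p) = a [^] w" using G.pow_mod_q[OF ac K_ipowp[OF aK]] .
  finally have as: "a [^] s = inv b" using w by simp
  define z where "z = x2 \<otimes> x1 [^] s"
  have zc: "z \<in> carrier G" using x1 x2 by (simp add: z_def)
  have BA: "x1 [^] s \<otimes> x2 = x2 \<otimes> x1 [^] s \<otimes> cc [^] s"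
    using G.comm_pow[OF x2 x1 ccc crel cc2 cc1, of s 1] x2 by simp
  have EA: "cc [^] s \<otimes> x2 = x2 \<otimes> cc [^] s" using G.group_commutes_pow[OF cc2 ccc x2] .
  have E1: "cc [^] s \<otimes> x1 = x1 \<otimes> cc [^] s" using G.group_commutes_pow[OF cc1 ccc x1] .
  have EB: "cc [^] s \<otimes> x1 [^] s = x1 [^] s \<otimes> cc [^] s"
    using G.group_commutes_pow[OF E1[symmetric] x1, of s] ccc by simp
  have "z [^] p = x2 [^] p \<otimes> (x1 [^] s) [^] p \<otimes> (cc [^] s) [^] (p * (p - 1) div 2)"
    unfolding z_def by (rule G.prod_pow[OF x2 _ _ BA EA EB]) (use x1 ccc in auto)
  also have "(x1 [^] s) [^] p = inv b"
  proof -
    have "(x1 [^] s) [^] p = x1 [^] (s * p)" using G.nat_pow_pow[OF x1] by simp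
    also have "\<dots> = (x1 [^] p) [^] s" using G.nat_pow_pow[OF x1] by (simp add: mult.commute)
    finally show ?thesis using as by (simp add: a_def)
  qed
  also have "(cc [^] s) [^] (p * (p - 1) div 2) = \<one>"
  proof (cases "cc = \<one>")
    case True then show ?thesis by simp
  next
    case False
    then have "p \<noteq> 2" using h by blast
    then have "odd p" using pr p1 prime_odd_nat by fastforce
    then have "p * (p - 1) div 2 = p * ((p - 1) div 2)" by (simp add: div_mult_swap)
    moreover have "(cc [^] s) [^] (p * k) = \<one>" for k
    proof -
      have "(cc [^] s) [^] (p * k) = ((cc [^] p) [^] k) [^] s"
        using ccc by (simp add: G.nat_pow_pow mult.commute mult.left_commute)
      then show ?thesis using K_powp[OF ccK] by simp
    qed
    ultimately show ?thesis by simp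
  qed
  finally have zp: "z [^] p = \<one>" using bc by (simp add: b_def[symmetric])
  have ind: "indep (phi x1) (phi z)"
    using indep_z[of s] x1 x2 by (simp add: z_def phi_mult phi_npow)
  have geq: "generate G {x1, z} = generate G {x1, x2}"
  proof (rule gen_eq[OF _ _ _ _ x1 zc])
    have sg: "subgroup (generate G {x1, x2}) G" using G.generate_is_subgroup x1 x2 by simp
    have i: "x1 \<in> generate G {x1, x2}" "x2 \<in> generate G {x1, x2}" by (auto intro: generate.incl)
    then show "x1 \<in> generate G {x1, x2}" by simp
    show "z \<in> generate G {x1, x2}" unfolding z_def
      using i sg by (simp add: subgroup.m_closed G.subgroup_nat_pow_closed')
    have sg2: "subgroup (generate G {x1, z}) G" using G.generate_is_subgroup x1 zc by simp
    have i2: "x1 \<in> generate G {x1, z}" "z \<in> generate G {x1, z}" by (auto intro: generate.incl)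
    then show "x1 \<in> generate G {x1, z}" by simp
    have "z \<otimes> inv (x1 [^] s) \<in> generate G {x1, z}"
      using i2 sg2 by (simp add: subgroup.m_closed subgroup.m_inv_closed G.subgroup_nat_pow_closed')
    moreover have "z \<otimes> inv (x1 [^] s) = x2" using x1 x2 by (simp add: z_def G.m_assoc)
    ultimately show "x2 \<in> generate G {x1, z}" by simp
  qed
  have U: "(z \<otimes> x1 = x1 \<otimes> z \<longrightarrow> G\<lparr>carrier := generate G {x1,z}\<rparr> \<cong> Zmod (p ^ 2) \<times>\<times> Zmod p)
    \<and> (G\<lparr>carrier := generate G {x1,z}\<rparr> \<cong> Zmod (p ^ 2) \<times>\<times> Zmod p
       \<or> (\<exists>a. coprime a (int p) \<and> G\<lparr>carrier := generate G {x1,z}\<rparr> \<cong> U_grp p a))"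
    by (rule ucase[OF x1 zc aK[unfolded a_def] an[unfolded a_def] zp ind])
  have "z \<otimes> x1 = x1 \<otimes> z" if c1: "cc = \<one>"
  proof -
    have cm: "x1 \<otimes> x2 = x2 \<otimes> x1" using crel c1 x1 x2 by simp
    have "z \<otimes> x1 = x2 \<otimes> (x1 [^] s \<otimes> x1)" using x1 x2 by (simp add: z_def G.m_assoc)
    also have "x1 [^] s \<otimes> x1 = x1 \<otimes> x1 [^] s" using G.nat_pow_Suc2[OF x1] by simp
    also have "x2 \<otimes> (x1 \<otimes> x1 [^] s) = (x2 \<otimes> x1) \<otimes> x1 [^] s" using x1 x2 by (simp add: G.m_assoc)
    also have "\<dots> = (x1 \<otimes> x2) \<otimes> x1 [^] s" using cm by simp
    also have "\<dots> = x1 \<otimes> z" using x1 x2 by (simp add: z_def G.m_assoc)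
    finally show ?thesis .
  qed
  then show ?thesis using U geq by simp
qed

lemma caseIII:
  assumes a1: "x1 [^] p = \<one>" and a2: "x2 [^] p \<noteq> \<one>"
  shows "G\<lparr>carrier := generate G {x1, x2}\<rparr> \<cong> Zmod (p ^ 2) \<times>\<times> Zmod p
       \<or> (\<exists>a. coprime a (int p) \<and> G\<lparr>carrier := generate G {x1, x2}\<rparr> \<cong> U_grp p a)"
proof -
  have "(x1 \<otimes> x2 = x2 \<otimes> x1 \<longrightarrow> G\<lparr>carrier := generate G {x2,x1}\<rparr> \<cong> Zmod (p ^ 2) \<times>\<times> Zmod p)
    \<and> (G\<lparr>carrier := generate G {x2,x1}\<rparr> \<cong> Zmod (p ^ 2) \<times>\<times> Zmod p
       \<or> (\<exists>a. coprime a (int p) \<and> G\<lparr>carrier := generate G {x2,x1}\<rparr> \<cong> U_grp p a))"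
    by (rule ucase[OF x2 x1 K_powin[OF x2] a2 a1 indep21])
  then show ?thesis by (simp add: insert_commute)
qed

lemma caseI:
  assumes a1: "x1 [^] p = \<one>" and a2: "x2 [^] p = \<one>"
  shows "(if p = 2 then
         G\<lparr>carrier := generate G {x1, x2}\<rparr> \<cong> Zmod 2 \<times>\<times> Zmod 2
       \<or> G\<lparr>carrier := generate G {x1, x2}\<rparr> \<cong> D4_grp
       else
         G\<lparr>carrier := generate G {x1, x2}\<rparr> \<cong> Zmod p \<times>\<times> Zmod p
       \<or> (\<exists>a. coprime a (int p) \<and> G\<lparr>carrier := generate G {x1, x2}\<rparr> \<cong> U_grp p a)
       \<or> (G\<lparr>carrier := generate G {x1, x2}\<rparr> \<cong> Heis_grp p
          \<and> generate G {x1 \<otimes> x2 \<otimes> inv x1 \<otimes> inv x2}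
              = generate G {x1, x2} \<inter> kernel G M phi))"
proof (cases "cc = \<one>")
  case True
  then have "G\<lparr>carrier := generate G {x1, x2}\<rparr> \<cong> Zmod p \<times>\<times> Zmod p" using Zp_iso a1 a2 by blast
  then show ?thesis by auto
next
  case False
  show ?thesis
  proof (cases "p = 2")
    case True
    then show ?thesis using D4_iso[OF a1 a2 False True] by simp
  next
    case p2: False
    then show ?thesis using Heis_case[OF a1 a2 False] by (simp add: cc_def)
  qed
qed

lemma caseII:
  assumes a1: "x1 [^] p \<noteq> \<one>" and a2: "x2 [^] p \<noteq> \<one>"
  shows "(if p = 2 then
         G\<lparr>carrier := generate G {x1, x2}\<rparr> \<cong> Zmod 4 \<times>\<times> Zmod 2
       \<or> G\<lparr>carrier := generate G {x1, x2}\<rparr> \<cong> Q8_grp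
       else
         G\<lparr>carrier := generate G {x1, x2}\<rparr> \<cong> Zmod (p ^ 2) \<times>\<times> Zmod p
       \<or> (\<exists>a. coprime a (int p) \<and> G\<lparr>carrier := generate G {x1, x2}\<rparr> \<cong> U_grp p a))"
proof (cases "p = 2")
  case True
  show ?thesis
  proof (cases "cc = \<one>")
    case c1: True
    then have "G\<lparr>carrier := generate G {x1, x2}\<rparr> \<cong> Zmod (p ^ 2) \<times>\<times> Zmod p"
      using Zsq_case[OF a1 a2] by blast
    then show ?thesis using True by simp
  next
    case False
    then show ?thesis using Q8_iso[OF a1 a2 False True] True by simp
  qed
next
  case False
  then show ?thesis using Zsq_case[OF a1 a2] by simp
qed

end

theorem lemma4p2:
  fixes p :: nat
    and Mh :: "('a,'c) monoid_scheme" and M :: "('b,'d) monoid_scheme"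
    and phi :: "'a \<Rightarrow> 'b"
    and m1 m2 :: 'b and x1 x2 :: 'a
  assumes "Factorial_Ring.prime p"
    and "group Mh" and "comm_group M" and "finite (carrier M)"
    and "\<forall>m \<in> carrier M. m [^]\<^bsub>M\<^esub> p = \<one>\<^bsub>M\<^esub>"
    and "phi \<in> hom Mh M" and "phi ` carrier Mh = carrier M"
    and "card (kernel Mh M phi) = p"
    and "frattini_ext Mh M phi"
    and "m1 \<in> carrier M" and "m2 \<in> carrier M"
    and "card (generate M {m1, m2}) = p ^ 2"
    and "x1 \<in> carrier Mh" and "x2 \<in> carrier Mh" and "phi x1 = m1" and "phi x2 = m2"
  shows
   "(m1 \<in> V_set p Mh M phi \<and> m2 \<in> V_set p Mh M phi \<longrightarrow>
      (if p = 2 then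
         Mh\<lparr>carrier := generate Mh {x1, x2}\<rparr> \<cong> Zmod 2 \<times>\<times> Zmod 2
       \<or> Mh\<lparr>carrier := generate Mh {x1, x2}\<rparr> \<cong> D4_grp
       else
         Mh\<lparr>carrier := generate Mh {x1, x2}\<rparr> \<cong> Zmod p \<times>\<times> Zmod p
       \<or> (\<exists>a. coprime a (int p) \<and> Mh\<lparr>carrier := generate Mh {x1, x2}\<rparr> \<cong> U_grp p a)
       \<or> (Mh\<lparr>carrier := generate Mh {x1, x2}\<rparr> \<cong> Heis_grp p
          \<and> generate Mh {x1 \<otimes>\<^bsub>Mh\<^esub> x2 \<otimes>\<^bsub>Mh\<^esub> inv\<^bsub>Mh\<^esub> x1 \<otimes>\<^bsub>Mh\<^esub> inv\<^bsub>Mh\<^esub> x2}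
              = generate Mh {x1, x2} \<inter> kernel Mh M phi)))
  \<and> (m1 \<in> carrier M - V_set p Mh M phi \<and> m2 \<in> carrier M - V_set p Mh M phi \<longrightarrow>
      (if p = 2 then
         Mh\<lparr>carrier := generate Mh {x1, x2}\<rparr> \<cong> Zmod 4 \<times>\<times> Zmod 2
       \<or> Mh\<lparr>carrier := generate Mh {x1, x2}\<rparr> \<cong> Q8_grp
       else
         Mh\<lparr>carrier := generate Mh {x1, x2}\<rparr> \<cong> Zmod (p ^ 2) \<times>\<times> Zmod p
       \<or> (\<exists>a. coprime a (int p) \<and> Mh\<lparr>carrier := generate Mh {x1, x2}\<rparr> \<cong> U_grp p a)))
  \<and> (m1 \<in> V0_set p Mh M phi \<and> m2 \<in> carrier M - V_set p Mh M phi \<longrightarrow>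
         Mh\<lparr>carrier := generate Mh {x1, x2}\<rparr> \<cong> Zmod (p ^ 2) \<times>\<times> Zmod p
       \<or> (\<exists>a. coprime a (int p) \<and> Mh\<lparr>carrier := generate Mh {x1, x2}\<rparr> \<cong> U_grp p a))"
proof -
  note A = assms
  have "L Mh M phi p x1 x2"
  proof (rule L.intro[OF A(2) A(3)])
    show "L_axioms Mh M phi p x1 x2" unfolding L_axioms_def using A by auto
  qed
  then interpret L Mh M phi p x1 x2 .
  have V0_pow: "x [^]\<^bsub>Mh\<^esub> p = \<one>\<^bsub>Mh\<^esub>" if "phi x \<in> V0_set p Mh M phi" "x \<in> carrier Mh" for x
  proof -
    have "group.ord Mh x = p" using that by (simp add: V0_set_def)
    then show ?thesis using G.pow_ord_eq_1[OF that(2)] by simp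
  qed
  have m1V: "m1 \<in> V_set p Mh M phi \<Longrightarrow> m1 \<in> V0_set p Mh M phi"
    using m1_ne A by (auto simp: V_set_def)
  have m2V: "m2 \<in> V_set p Mh M phi \<Longrightarrow> m2 \<in> V0_set p Mh M phi"
    using m2_ne A by (auto simp: V_set_def)
  have notV: "x [^]\<^bsub>Mh\<^esub> p \<noteq> \<one>\<^bsub>Mh\<^esub>"
    if "phi x \<in> carrier M - V_set p Mh M phi" "x \<in> carrier Mh" "phi x \<noteq> \<one>\<^bsub>M\<^esub>" for x
  proof
    assume xp: "x [^]\<^bsub>Mh\<^esub> p = \<one>\<^bsub>Mh\<^esub>"
    have "\<forall>y \<in> carrier Mh. phi y = phi x \<longrightarrow> group.ord Mh y = p"
      using lift_ord[OF that(2) xp that(3)] by blast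
    then have "phi x \<in> V0_set p Mh M phi" using that by (simp add: V0_set_def)
    then show False using that(1) by (simp add: V_set_def)
  qed
  show ?thesis
  proof (intro conjI impI)
    assume "m1 \<in> V_set p Mh M phi \<and> m2 \<in> V_set p Mh M phi"
    then have "x1 [^]\<^bsub>Mh\<^esub> p = \<one>\<^bsub>Mh\<^esub>" "x2 [^]\<^bsub>Mh\<^esub> p = \<one>\<^bsub>Mh\<^esub>"
      using V0_pow m1V m2V A by auto
    from caseI[OF this] show "(if p = 2 then
         Mh\<lparr>carrier := generate Mh {x1, x2}\<rparr> \<cong> Zmod 2 \<times>\<times> Zmod 2
       \<or> Mh\<lparr>carrier := generate Mh {x1, x2}\<rparr> \<cong> D4_grp
       else
         Mh\<lparr>carrier := generate Mh {x1, x2}\<rparr> \<cong> Zmod p \<times>\<times> Zmod p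
       \<or> (\<exists>a. coprime a (int p) \<and> Mh\<lparr>carrier := generate Mh {x1, x2}\<rparr> \<cong> U_grp p a)
       \<or> (Mh\<lparr>carrier := generate Mh {x1, x2}\<rparr> \<cong> Heis_grp p
          \<and> generate Mh {x1 \<otimes>\<^bsub>Mh\<^esub> x2 \<otimes>\<^bsub>Mh\<^esub> inv\<^bsub>Mh\<^esub> x1 \<otimes>\<^bsub>Mh\<^esub> inv\<^bsub>Mh\<^esub> x2}
              = generate Mh {x1, x2} \<inter> kernel Mh M phi))" .
  next
    assume h: "m1 \<in> carrier M - V_set p Mh M phi \<and> m2 \<in> carrier M - V_set p Mh M phi"
    have "x1 [^]\<^bsub>Mh\<^esub> p \<noteq> \<one>\<^bsub>Mh\<^esub>" using notV[of x1] h m1_ne A by simp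
    moreover have "x2 [^]\<^bsub>Mh\<^esub> p \<noteq> \<one>\<^bsub>Mh\<^esub>" using notV[of x2] h m2_ne A by simp
    ultimately show "(if p = 2 then
         Mh\<lparr>carrier := generate Mh {x1, x2}\<rparr> \<cong> Zmod 4 \<times>\<times> Zmod 2
       \<or> Mh\<lparr>carrier := generate Mh {x1, x2}\<rparr> \<cong> Q8_grp
       else
         Mh\<lparr>carrier := generate Mh {x1, x2}\<rparr> \<cong> Zmod (p ^ 2) \<times>\<times> Zmod p
       \<or> (\<exists>a. coprime a (int p) \<and> Mh\<lparr>carrier := generate Mh {x1, x2}\<rparr> \<cong> U_grp p a))"
      by (rule caseII)
  next
    assume h: "m1 \<in> V0_set p Mh M phi \<and> m2 \<in> carrier M - V_set p Mh M phi"
    have "x1 [^]\<^bsub>Mh\<^esub> p = \<one>\<^bsub>Mh\<^esub>" using V0_pow h A by auto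
    moreover have "x2 [^]\<^bsub>Mh\<^esub> p \<noteq> \<one>\<^bsub>Mh\<^esub>" using notV[of x2] h m2_ne A by simp
    ultimately show "Mh\<lparr>carrier := generate Mh {x1, x2}\<rparr> \<cong> Zmod (p ^ 2) \<times>\<times> Zmod p
       \<or> (\<exists>a. coprime a (int p) \<and> Mh\<lparr>carrier := generate Mh {x1, x2}\<rparr> \<cong> U_grp p a)"
      by (rule caseIII)
  qed
qed


end
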